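(* Let $P$ be the Borel probability measure on $\mathbb{R}$ with density $f(x)=(3/2)^m$ if $x\in J_m:=[1-\frac{1}{3^{m-1}},1-\frac{2}{3^m}]$ for some $m\in\mathbb{N}$, and $f(x)=0$ otherwise. Let $k,n\in\mathbb{N}$ and let $\alpha_n$ be an optimal set of $n$-means for $P$ such that $\mathrm{card}(\alpha_n\cap[J_{k+1}(0),1])\ge2$. Then: (i) $\alpha_n\cap J_{k+1}\neq\emptyset$ and $\alpha_n\cap[J_{k+2}(0),1]\neq\emptyset$; (ii) $\alpha_n$ contains no point of the open interval $(J_{k+1}(1),J_{k+2}(0))$; (iii) the Voronoi region of any point of $\alpha_n\cap J_{k+1}$ contains no point of $[J_{k+2}(0),1]$, and the Voronoi region of any point of $\alpha_n\cap[J_{k+2}(0),1]$ contains no point of $J_{k+1}$.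
   Context: $\mathbb{N}=\{1,2,\dots\}$. For $m\in\mathbb{N}$, $J_m(0)=1-\frac{1}{3^{m-1}}$ and $J_m(1)=1-\frac{2}{3^m}$ are the left and right endpoints of $J_m$. An optimal set of $n$-means for $P$ is a set $\alpha\subset\mathbb{R}$ with $\mathrm{card}(\alpha)\le n$ attaining $\inf\{\int\min_{a\in\alpha}(x-a)^2\,dP(x):\mathrm{card}(\alpha)\le n\}$. For a finite $\alpha$ and $a\in\alpha$, the Voronoi region of $a$ is $M(a|\alpha)=\{x\in\mathbb{R}:|x-a|=\min_{b\in\alpha}|x-b|\}$. *)

theory Defs
  imports "HOL-Analysis.Analysis"
begin

definition J0 :: "nat \<Rightarrow> real" where "J0 m = 1 - 1 / 3 ^ (m - 1)"
definition J1 :: "nat \<Rightarrow> real" where "J1 m = 1 - 2 / 3 ^ m"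
definition J :: "nat \<Rightarrow> real set" where "J m = {J0 m .. J1 m}"

text \<open>Density: (3/2)^m on J m (m \<ge> 1), 0 elsewhere; the J m are pairwise disjoint.\<close>
definition dens :: "real \<Rightarrow> real" where
  "dens x = (if \<exists>m\<ge>1. x \<in> J m then (3/2) ^ (THE m. m \<ge> 1 \<and> x \<in> J m) else 0)"

definition P :: "real measure" where
  "P = density lborel (\<lambda>x. ennreal (dens x))"

definition distortion :: "real set \<Rightarrow> ennreal" where
  "distortion \<alpha> = (\<integral>\<^sup>+ x. ennreal (Min ((\<lambda>a. (x - a)\<^sup>2) ` \<alpha>)) \<partial>P)"

definition optimal_n_means :: "nat \<Rightarrow> real set \<Rightarrow> bool" where
  "optimal_n_means n \<alpha> \<longleftrightarrow> finite \<alpha> \<and> \<alpha> \<noteq> {} \<and> card \<alpha> \<le> n \<and>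
     (\<forall>\<beta>. finite \<beta> \<and> \<beta> \<noteq> {} \<and> card \<beta> \<le> n \<longrightarrow> distortion \<alpha> \<le> distortion \<beta>)"

definition voronoi :: "real \<Rightarrow> real set \<Rightarrow> real set" where
  "voronoi a \<alpha> = {x. \<bar>x - a\<bar> = Min ((\<lambda>b. \<bar>x - b\<bar>) ` \<alpha>)}"

end

theory Submission
  imports Defs
begin


lemma J0_alt: "m \<ge> 1 \<Longrightarrow> J0 m = 1 - 3 / 3 ^ m"
proof -
  assume "m \<ge> 1"
  then obtain k where "m = Suc k" by (cases m) auto
  then show ?thesis by (simp add: J0_def)
qed

lemma J0_lt_J1: "m \<ge> 1 \<Longrightarrow> J0 m < J1 m"
  by (simp add: J0_alt J1_def divide_strict_right_mono)

lemma J1_lt_J0_Suc: "J1 m < J0 (Suc m)"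
  by (simp add: J0_def J1_def divide_strict_right_mono)

lemma J0_Suc: "J0 (Suc m) = 1 - 1 / 3 ^ m"
  by (simp add: J0_def)

lemma J0_mono_lt: "1 \<le> m \<Longrightarrow> m < m' \<Longrightarrow> J1 m < J0 m'"
proof (induction m' rule: nat_less_induct)
  case (1 m')
  then obtain k where k: "m' = Suc k" by (cases m') auto
  show ?case
  proof (cases "k = m")
    case True thus ?thesis using k J1_lt_J0_Suc by simp
  next
    case False
    hence "m < k" using 1 k by simp
    hence "J1 m < J0 k" using 1 k by auto
    moreover have "J0 k \<le> J0 (Suc k)"
      using \<open>m < k\<close> \<open>1 \<le> m\<close>
      by (cases k) (auto simp: J0_def field_simps)
    ultimately show ?thesis using k by simp
  qed
qed

lemma J_disj: "1 \<le> m \<Longrightarrow> 1 \<le> m' \<Longrightarrow> x \<in> J m \<Longrightarrow> x \<in> J m' \<Longrightarrow> m = m'"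
proof (rule ccontr)
  assume h: "1 \<le> m" "1 \<le> m'" "x \<in> J m" "x \<in> J m'" "m \<noteq> m'"
  show False
  proof (cases "m < m'")
    case True
    thus False using J0_mono_lt[of m m'] h by (auto simp: J_def)
  next
    case False
    hence "m' < m" using h by simp
    thus False using J0_mono_lt[of m' m] h by (auto simp: J_def)
  qed
qed

lemma dens_on: "1 \<le> m \<Longrightarrow> x \<in> J m \<Longrightarrow> dens x = (3/2) ^ m"
proof -
  assume h: "1 \<le> m" "x \<in> J m"
  have "(THE m. m \<ge> 1 \<and> x \<in> J m) = m"
    using h J_disj by (intro the_equality) auto
  thus ?thesis using h unfolding dens_def by auto
qed

definition Supp :: "real set" where "Supp = (\<Union>m\<in>{1..}. J m)"

lemma dens_off: "x \<notin> Supp \<Longrightarrow> dens x = 0"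
  by (auto simp: dens_def Supp_def)

lemma dens_nonneg: "0 \<le> dens x"
  by (auto simp: dens_def)

lemma J0_ge0: "0 \<le> J0 m"
  by (cases m) (auto simp: J0_def)

lemma J1_lt1: "J1 m < 1"
  by (simp add: J1_def)

lemma J_sub: "J m \<subseteq> {0..<1}"
  using J0_ge0[of m] J1_lt1[of m] by (auto simp: J_def)

lemma Supp_sub: "Supp \<subseteq> {0..<1}"
  using J_sub by (auto simp: Supp_def)

lemma dens_eq_sum: "dens x = (\<Sum>i. indicator (J (Suc i)) x * (3/2) ^ Suc i)"
proof (cases "x \<in> Supp")
  case True
  then obtain m where m: "1 \<le> m" "x \<in> J m" by (auto simp: Supp_def)
  then obtain i where i: "m = Suc i" by (cases m) auto
  have "(\<Sum>j. indicator (J (Suc j)) x * ((3::real)/2) ^ Suc j) = (\<Sum>j\<in>{i}. indicator (J (Suc j)) x * ((3::real)/2) ^ Suc j)"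
  proof (rule suminf_finite)
    fix j assume "j \<notin> {i}"
    hence "x \<notin> J (Suc j)" using J_disj[of "Suc j" m x] m i by auto
    thus "indicator (J (Suc j)) x * ((3::real)/2) ^ Suc j = 0" by simp
  qed auto
  thus ?thesis using dens_on[OF m] m i by simp
next
  case False
  hence "\<And>j. x \<notin> J (Suc j)" by (auto simp: Supp_def)
  thus ?thesis using dens_off[OF False] by simp
qed

lemma dens_meas[measurable]: "dens \<in> borel_measurable borel"
  by (subst dens_eq_sum[abs_def]) (auto simp: J_def)

lemma Supp_meas[measurable]: "Supp \<in> sets borel"
  unfolding Supp_def J_def by auto

lemma P_def': "P = density lborel dens"
  by (simp add: P_def)

lemma sets_P[simp, measurable_cong]: "sets P = sets borel"
  by (simp add: P_def)
lemma space_P[simp]: "space P = UNIV"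
  by (simp add: P_def)

lemma emeasure_P: "A \<in> sets borel \<Longrightarrow> emeasure P A = (\<integral>\<^sup>+x. ennreal (dens x) * indicator A x \<partial>lborel)"
  unfolding P_def by (subst emeasure_density) auto

lemma P_notSupp: "emeasure P (- Supp) = 0"
proof -
  have "emeasure P (- Supp) = (\<integral>\<^sup>+x. ennreal (dens x) * indicator (- Supp) x \<partial>lborel)"
    by (rule emeasure_P) auto
  also have "(\<lambda>x. ennreal (dens x) * indicator (- Supp) x) = (\<lambda>x. 0)"
    by (auto simp: fun_eq_iff dens_off split: split_indicator)
  finally show ?thesis by simp
qed

lemma AE_Supp: "AE x in P. x \<in> Supp"
  using P_notSupp by (intro AE_I[of _ _ "- Supp"]) auto

lemma P_single: "emeasure P {x} = 0"
proof -
  have "emeasure P {x} = (\<integral>\<^sup>+y. ennreal (dens y) * indicator {x} y \<partial>lborel)"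
    by (rule emeasure_P) auto
  also have "\<dots> = (\<integral>\<^sup>+y. ennreal (dens x) * indicator {x} y \<partial>lborel)"
    by (intro nn_integral_cong) (auto split: split_indicator)
  also have "\<dots> = 0" by (simp add: nn_integral_cmult)
  finally show ?thesis .
qed

lemma AE_neq: "AE y in P. y \<noteq> x"
  using P_single[of x] by (intro AE_I[of _ _ "{x}"]) auto


lemma J0_mono: "m \<le> m' \<Longrightarrow> J0 m \<le> J0 m'"
proof -
  assume "m \<le> m'"
  hence "(3::real) ^ (m - 1) \<le> 3 ^ (m' - 1)" by (intro power_increasing) auto
  thus ?thesis unfolding J0_def by (intro diff_left_mono divide_left_mono) auto
qed

lemma emeasure_J: "emeasure lborel (J m) = ennreal (1 / 3 ^ m)" if "1 \<le> m"
proof -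
  have "J1 m - J0 m = 1 / 3 ^ m" using that by (simp add: J0_alt J1_def field_simps)
  thus ?thesis using J0_lt_J1[OF that] by (simp add: J_def)
qed

lemma tail_decomp:
  assumes "1 \<le> m"
  shows "ennreal (dens y) * indicator {J0 m..1} y = (\<Sum>i. ennreal ((3/2) ^ (i + m)) * indicator (J (i + m)) y)"
proof (cases "y \<in> Supp \<and> J0 m \<le> y")
  case True
  then obtain p where p: "1 \<le> p" "y \<in> J p" "J0 m \<le> y" by (auto simp: Supp_def)
  have "m \<le> p"
  proof (rule ccontr)
    assume "\<not> m \<le> p" hence "p < m" by simp
    hence "J1 p < J0 m" using J0_mono_lt p by auto
    thus False using p by (auto simp: J_def)
  qed
  then obtain i where i: "p = i + m" by (metis le_add_diff_inverse2)
  have "(\<Sum>j. ennreal ((3/2) ^ (j + m)) * indicator (J (j + m)) y) = (\<Sum>j\<in>{i}. ennreal ((3/2) ^ (j + m)) * indicator (J (j + m)) y)"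
  proof (rule suminf_finite)
    fix j assume "j \<notin> {i}"
    hence "y \<notin> J (j + m)" using J_disj[of "j+m" p y] p i assms by auto
    thus "ennreal ((3/2) ^ (j + m)) * indicator (J (j + m)) y = 0" by simp
  qed auto
  moreover have "\<And>g::nat\<Rightarrow>ennreal. (\<Sum>j\<in>{i}. g j) = g i" by simp
  moreover have "y \<le> 1" using p J_sub[of p] by auto
  ultimately show ?thesis using dens_on[OF p(1,2)] p i by (simp del: sum.insert sum.empty)
next
  case False
  show ?thesis
  proof (cases "y \<in> Supp")
    case True
    then obtain p where p: "1 \<le> p" "y \<in> J p" by (auto simp: Supp_def)
    have "y < J0 m" using False True by auto
    { fix j
      have "J0 m \<le> J0 (j + m)" by (rule J0_mono) simp
      hence "y \<notin> J (j + m)" using \<open>y < J0 m\<close> by (auto simp: J_def) }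
    thus ?thesis using \<open>y < J0 m\<close> by simp
  next
    case False
    hence "\<And>j. y \<notin> J (j + m)" using assms by (auto simp: Supp_def)
    thus ?thesis using dens_off[OF False] by simp
  qed
qed

lemma P_tail: "emeasure P {J0 m..1} = ennreal ((1/2) ^ m * 2)" if m: "1 \<le> m"
proof -
  have "emeasure P {J0 m..1} = (\<integral>\<^sup>+y. ennreal (dens y) * indicator {J0 m..1} y \<partial>lborel)"
    by (rule emeasure_P) auto
  also have "\<dots> = (\<integral>\<^sup>+y. (\<Sum>i. ennreal ((3/2) ^ (i + m)) * indicator (J (i + m)) y) \<partial>lborel)"
    using tail_decomp[OF m] by simp
  also have "\<dots> = (\<Sum>i. \<integral>\<^sup>+y. ennreal ((3/2) ^ (i + m)) * indicator (J (i + m)) y \<partial>lborel)"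
    by (rule nn_integral_suminf) (auto simp: J_def)
  also have "\<dots> = (\<Sum>i. ennreal ((1/2) ^ (i + m)))"
  proof (rule suminf_cong)
    fix i
    have "(\<integral>\<^sup>+y. ennreal ((3/2) ^ (i + m)) * indicator (J (i + m)) y \<partial>lborel) = ennreal ((3/2) ^ (i + m)) * emeasure lborel (J (i+m))"
      by (subst nn_integral_cmult_indicator) (auto simp: J_def)
    also have "\<dots> = ennreal ((3/2) ^ (i + m) * (1 / 3 ^ (i+m)))"
      using emeasure_J[of "i+m"] m by (simp add: ennreal_mult[symmetric])
    also have "(3/2) ^ (i + m) * (1 / 3 ^ (i+m)) = ((1::real)/2) ^ (i + m)"
      by (simp add: power_divide field_simps)
    finally show "(\<integral>\<^sup>+y. ennreal ((3/2) ^ (i + m)) * indicator (J (i + m)) y \<partial>lborel) = ennreal ((1/2) ^ (i + m))" .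
  qed
  also have "\<dots> = ennreal ((1/2) ^ m * 2)"
  proof (rule suminf_ennreal_eq)
    have "(\<lambda>i. (1/2::real) ^ m * (1/2) ^ i) sums ((1/2) ^ m * (1 / (1 - 1/2)))"
      by (intro sums_mult geometric_sums) auto
    thus "(\<lambda>i. (1/2::real) ^ (i + m)) sums ((1/2) ^ m * 2)"
      by (simp add: power_add mult.commute)
  qed auto
  finally show ?thesis .
qed

lemma P_UNIV: "emeasure P UNIV = 1"
proof -
  have "emeasure P UNIV = emeasure P Supp"
    using P_notSupp emeasure_Un_null_set[of Supp P "- Supp"] by (auto simp: Un_commute null_sets_def)
  also have "\<dots> \<le> emeasure P {J0 1..1}"
    using Supp_sub by (intro emeasure_mono) (auto simp: J0_def)
  also have "\<dots> = 1" using P_tail[of 1] by simp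
  finally have "emeasure P UNIV \<le> 1" .
  moreover have "emeasure P {J0 1..1} \<le> emeasure P UNIV" by (intro emeasure_mono) auto
  ultimately show ?thesis using P_tail[of 1] by simp
qed

interpretation Pprob: finite_measure P
  by standard (simp add: P_UNIV)

lemma measure_P_tail: "1 \<le> m \<Longrightarrow> measure P {J0 m..1} = (1/2) ^ m * 2"
  using P_tail by (simp add: measure_def)

lemma AE_01: "AE x in P. 0 \<le> x \<and> x < 1"
  using AE_Supp Supp_sub by (auto elim!: eventually_mono)

lemma intP_bounded:
  fixes h :: "real \<Rightarrow> real"
  assumes [measurable]: "h \<in> borel_measurable borel" and "\<And>x. 0 \<le> x \<Longrightarrow> x < 1 \<Longrightarrow> \<bar>h x\<bar> \<le> B"
  shows "integrable P h"
proof (rule Pprob.integrable_const_bound[where B=B])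
  show "AE x in P. norm (h x) \<le> B" using AE_01 by eventually_elim (use assms in auto)
qed simp

lemma intP_cont:
  fixes h :: "real \<Rightarrow> real"
  assumes "continuous_on UNIV h"
  shows "integrable P h"
proof -
  have "compact {0..1::real}" by simp
  then obtain B where "\<forall>x\<in>{0..1}. norm (h x) \<le> B"
    using compact_imp_bounded[OF compact_continuous_image[OF continuous_on_subset[OF assms], of "{0..1}"]]
    by (auto simp: bounded_iff)
  moreover have "h \<in> borel_measurable borel" using assms borel_measurable_continuous_onI by blast
  ultimately show ?thesis by (intro intP_bounded[of h B]) auto
qed

lemma integral_P_density:
  assumes [measurable]: "f \<in> borel_measurable borel"
  shows "integral\<^sup>L P f = (\<integral>y. dens y * f y \<partial>lborel)"
  unfolding P_def by (subst integral_density) (auto simp: dens_nonneg)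

lemma int_piece_gen:
  fixes h :: "real \<Rightarrow> real"
  assumes m: "1 \<le> m" and E: "E \<subseteq> J m" "E \<in> sets borel" and [measurable]: "h \<in> borel_measurable borel"
  shows "(\<integral>y. indicator E y * h y \<partial>P) = (3/2) ^ m * (\<integral>y. indicator E y * h y \<partial>lborel)"
proof -
  have "(\<integral>y. indicator E y * h y \<partial>P) = (\<integral>y. dens y * (indicator E y * h y) \<partial>lborel)"
    using E by (intro integral_P_density) auto
  also have "\<dots> = (\<integral>y. (3/2) ^ m * (indicator E y * h y) \<partial>lborel)"
    using E dens_on[OF m] by (intro Bochner_Integration.integral_cong) (auto split: split_indicator)
  finally show ?thesis by simp
qed

lemma int_piece:
  fixes h H :: "real \<Rightarrow> real"
  assumes m: "1 \<le> m" and uv: "u \<le> v" "J0 m \<le> u" "v \<le> J1 m"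
    and D: "\<And>x. (H has_real_derivative h x) (at x)" and c: "continuous_on UNIV h"
  shows "(\<integral>y. indicator {u..v} y * h y \<partial>P) = (3/2) ^ m * (H v - H u)"
proof -
  have hm: "h \<in> borel_measurable borel" using c borel_measurable_continuous_onI by blast
  have "(\<integral>y. indicator {u..v} y * h y \<partial>P) = (3/2) ^ m * (\<integral>y. indicator {u..v} y * h y \<partial>lborel)"
    using uv by (intro int_piece_gen[OF m _ _ hm]) (auto simp: J_def)
  also have "(\<integral>y. indicator {u..v} y * h y \<partial>lborel) = H v - H u"
    using integral_FTC_atLeastAtMost[of u v H h] uv D c
    by (auto simp: has_real_derivative_iff_has_vector_derivative[symmetric]
        intro: has_field_derivative_at_within continuous_on_subset)
  finally show ?thesis .
qed


definition dm :: "real set \<Rightarrow> real \<Rightarrow> real" where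
  "dm \<alpha> x = Min ((\<lambda>a. (x - a)\<^sup>2) ` \<alpha>)"

definition D :: "real set \<Rightarrow> real" where
  "D \<alpha> = (\<integral>x. dm \<alpha> x \<partial>P)"

lemma dm_le: "finite \<alpha> \<Longrightarrow> a \<in> \<alpha> \<Longrightarrow> dm \<alpha> x \<le> (x - a)\<^sup>2"
  unfolding dm_def by (intro Min_le) auto

lemma dm_ex: "finite \<alpha> \<Longrightarrow> \<alpha> \<noteq> {} \<Longrightarrow> \<exists>a\<in>\<alpha>. dm \<alpha> x = (x - a)\<^sup>2"
proof -
  assume "finite \<alpha>" "\<alpha> \<noteq> {}"
  hence "Min ((\<lambda>a. (x - a)\<^sup>2) ` \<alpha>) \<in> (\<lambda>a. (x - a)\<^sup>2) ` \<alpha>" by (intro Min_in) auto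
  thus ?thesis unfolding dm_def by auto
qed

lemma dm_nonneg: "finite \<alpha> \<Longrightarrow> \<alpha> \<noteq> {} \<Longrightarrow> 0 \<le> dm \<alpha> x"
proof -
  assume "finite \<alpha>" "\<alpha> \<noteq> {}"
  then obtain a where "dm \<alpha> x = (x - a)\<^sup>2" using dm_ex by blast
  thus ?thesis by simp
qed

lemma dm_mono: "finite \<beta> \<Longrightarrow> \<alpha> \<subseteq> \<beta> \<Longrightarrow> \<alpha> \<noteq> {} \<Longrightarrow> dm \<beta> x \<le> dm \<alpha> x"
proof -
  assume h: "finite \<beta>" "\<alpha> \<subseteq> \<beta>" "\<alpha> \<noteq> {}"
  hence "finite \<alpha>" using finite_subset by blast
  then obtain a where a: "a \<in> \<alpha>" "dm \<alpha> x = (x - a)\<^sup>2" using dm_ex h by blast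
  have "dm \<beta> x \<le> (x - a)\<^sup>2" using a h by (intro dm_le) auto
  thus ?thesis using a by simp
qed

lemma dm_meas[measurable]: "finite \<alpha> \<Longrightarrow> dm \<alpha> \<in> borel_measurable borel"
  unfolding dm_def[abs_def] by measurable

lemma dm_int: "finite \<alpha> \<Longrightarrow> \<alpha> \<noteq> {} \<Longrightarrow> integrable P (dm \<alpha>)"
proof -
  assume f: "finite \<alpha>" "\<alpha> \<noteq> {}"
  then obtain a where a: "a \<in> \<alpha>" by auto
  show ?thesis
  proof (rule intP_bounded[where B="(1 + \<bar>a\<bar>)\<^sup>2"])
    fix x :: real assume x: "0 \<le> x" "x < 1"
    have "\<bar>dm \<alpha> x\<bar> = dm \<alpha> x" using dm_nonneg[OF f] by simp
    also have "\<dots> \<le> (x - a)\<^sup>2" by (rule dm_le[OF f(1) a])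
    also have "\<dots> = \<bar>x - a\<bar>\<^sup>2" by simp
    also have "\<dots> \<le> (1 + \<bar>a\<bar>)\<^sup>2" using x by (intro power_mono) auto
    finally show "\<bar>dm \<alpha> x\<bar> \<le> (1 + \<bar>a\<bar>)\<^sup>2" .
  qed (use f in simp)
qed

lemma distortion_D: "finite \<alpha> \<Longrightarrow> \<alpha> \<noteq> {} \<Longrightarrow> distortion \<alpha> = ennreal (D \<alpha>)"
  unfolding distortion_def D_def dm_def[symmetric]
  by (rule nn_integral_eq_integral[OF dm_int]) (auto simp: dm_nonneg)

lemma opt_le:
  assumes "optimal_n_means n \<alpha>" "finite \<beta>" "\<beta> \<noteq> {}" "card \<beta> \<le> n"
  shows "D \<alpha> \<le> D \<beta>"
proof -
  have "distortion \<alpha> \<le> distortion \<beta>" using assms unfolding optimal_n_means_def by auto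
  moreover have "0 \<le> D \<beta>" unfolding D_def using assms by (intro integral_nonneg_AE) (auto simp: dm_nonneg)
  ultimately show ?thesis using assms unfolding optimal_n_means_def by (auto simp: distortion_D)
qed

lemma int_ind:
  fixes h :: "real \<Rightarrow> real"
  shows "R \<in> sets borel \<Longrightarrow> integrable P h \<Longrightarrow> integrable P (\<lambda>y. indicator R y * h y)"
  using integrable_mult_indicator[of R P h] by simp

lemma CL:
  assumes opt: "optimal_n_means n \<alpha>" and U: "U \<subseteq> \<alpha>" and V: "finite V" "V \<noteq> {}"
    and card: "card ((\<alpha> - U) \<union> V) \<le> n" and R[measurable]: "R \<in> sets borel"
    and out: "AE y in P. y \<notin> R \<longrightarrow> (\<exists>c\<in>\<alpha> - U. (y - c)\<^sup>2 \<le> dm \<alpha> y)"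
  shows "(\<integral>y. indicator R y * dm \<alpha> y \<partial>P) \<le> (\<integral>y. indicator R y * dm V y \<partial>P)"
proof -
  have fa: "finite \<alpha>" "\<alpha> \<noteq> {}" using opt unfolding optimal_n_means_def by auto
  define \<beta> where "\<beta> = (\<alpha> - U) \<union> V"
  have fb: "finite \<beta>" "\<beta> \<noteq> {}" using fa V unfolding \<beta>_def by auto
  have iV: "integrable P (\<lambda>y. indicator R y * dm V y)" by (rule int_ind[OF R dm_int[OF V]])
  have iA: "integrable P (\<lambda>y. indicator R y * dm \<alpha> y)" by (rule int_ind[OF R dm_int[OF fa]])
  have iA': "integrable P (dm \<alpha>)" by (rule dm_int[OF fa])
  have Vb: "V \<subseteq> \<beta>" unfolding \<beta>_def by blast
  have eq: "(\<lambda>y. indicator R y * dm V y + (1 - indicator R y) * dm \<alpha> y) = (\<lambda>y. indicator R y * dm V y + (dm \<alpha> y - indicator R y * dm \<alpha> y))"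
    by (rule ext) (simp add: algebra_simps)
  have iS: "integrable P (\<lambda>y. indicator R y * dm V y + (dm \<alpha> y - indicator R y * dm \<alpha> y))"
    by (intro Bochner_Integration.integrable_add Bochner_Integration.integrable_diff iV iA iA')
  have "D \<alpha> \<le> D \<beta>" using opt_le[OF opt fb] card \<beta>_def by simp
  also have "D \<beta> \<le> (\<integral>y. indicator R y * dm V y + (dm \<alpha> y - indicator R y * dm \<alpha> y) \<partial>P)"
    unfolding D_def
  proof (rule integral_mono_AE)
    show "integrable P (dm \<beta>)" using dm_int[OF fb] .
    show "integrable P (\<lambda>y. indicator R y * dm V y + (dm \<alpha> y - indicator R y * dm \<alpha> y))" by (rule iS)
    show "AE y in P. dm \<beta> y \<le> indicator R y * dm V y + (dm \<alpha> y - indicator R y * dm \<alpha> y)"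
      using out
    proof eventually_elim
      case (elim y)
      show ?case
      proof (cases "y \<in> R")
        case True
        have "dm \<beta> y \<le> dm V y" by (rule dm_mono[OF fb(1) Vb V(2)])
        thus ?thesis using True by simp
      next
        case False
        then obtain c where c: "c \<in> \<alpha> - U" "(y - c)\<^sup>2 \<le> dm \<alpha> y" using elim by blast
        have "c \<in> \<beta>" using c unfolding \<beta>_def by blast
        hence "dm \<beta> y \<le> (y - c)\<^sup>2" by (intro dm_le[OF fb(1)])
        thus ?thesis using c False by simp
      qed
    qed
  qed
  also have "(\<integral>y. indicator R y * dm V y + (dm \<alpha> y - indicator R y * dm \<alpha> y) \<partial>P) = (\<integral>y. indicator R y * dm V y \<partial>P) + ((\<integral>y. dm \<alpha> y \<partial>P) - (\<integral>y. indicator R y * dm \<alpha> y \<partial>P))"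
    using iV iA iA' by (simp add: Bochner_Integration.integral_add Bochner_Integration.integral_diff)
  finally show ?thesis unfolding D_def by simp
qed

lemma int_ind_poly:
  fixes h :: "real \<Rightarrow> real"
  assumes "R \<in> sets borel" "continuous_on UNIV h"
  shows "integrable P (\<lambda>y. indicator R y * h y)"
  by (rule int_ind[OF assms(1) intP_cont[OF assms(2)]])

lemma sq_expand:
  assumes R[measurable]: "R \<in> sets borel"
  shows "(\<integral>y. indicator R y * (y - c)\<^sup>2 \<partial>P) =
    (\<integral>y. indicator R y * y\<^sup>2 \<partial>P) - 2 * c * (\<integral>y. indicator R y * y \<partial>P) + c\<^sup>2 * (\<integral>y. indicator R y \<partial>P)"
proof -
  have i1: "integrable P (\<lambda>y. indicator R y * y\<^sup>2)" by (rule int_ind_poly) (auto intro!: continuous_intros)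
  have i2: "integrable P (\<lambda>y. indicator R y * y)" by (rule int_ind_poly) (auto intro!: continuous_intros)
  have i3: "integrable P (\<lambda>y. indicator R y :: real)"
    using int_ind_poly[OF R, of "\<lambda>_. 1"] by simp
  have "(\<lambda>y. indicator R y * (y - c)\<^sup>2) = (\<lambda>y. indicator R y * y\<^sup>2 - 2 * c * (indicator R y * y) + c\<^sup>2 * indicator R y)"
    by (auto simp: fun_eq_iff power2_eq_square algebra_simps)
  thus ?thesis using i1 i2 i3 by simp
qed

lemma mass_bound:
  assumes R[measurable]: "R \<in> sets borel"
  shows "\<bar>\<integral>y. indicator R y * y \<partial>P\<bar> \<le> (\<integral>y. indicator R y \<partial>P)"
proof -
  have "\<bar>\<integral>y. indicator R y * y \<partial>P\<bar> \<le> (\<integral>y. \<bar>indicator R y * y\<bar> \<partial>P)"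
    by (rule integral_abs_bound)
  also have "\<dots> \<le> (\<integral>y. indicator R y \<partial>P)"
  proof (rule integral_mono_AE)
    show "integrable P (\<lambda>y. \<bar>indicator R y * y\<bar>)"
      by (rule intP_bounded[where B=1]) (auto split: split_indicator)
    show "integrable P (\<lambda>y. indicator R y :: real)"
      using int_ind_poly[OF R, of "\<lambda>_. 1"] by simp
    show "AE y in P. \<bar>indicator R y * y\<bar> \<le> indicator R y"
      using AE_01 by eventually_elim (auto split: split_indicator)
  qed
  finally show ?thesis .
qed

lemma moment_lemma:
  fixes f m g a :: real
  assumes mb: "\<bar>f\<bar> \<le> m" and key: "\<And>c. g - 2 * a * f + a\<^sup>2 * m \<le> g - 2 * c * f + c\<^sup>2 * m"
  shows "f = a * m"
proof (cases "m = 0")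
  case True thus ?thesis using mb by simp
next
  case False
  hence mp: "m > 0" using mb by simp
  have "g - 2 * a * f + a\<^sup>2 * m \<le> g - 2 * (f/m) * f + (f/m)\<^sup>2 * m" by (rule key)
  moreover have "2 * (f/m) * f = 2 * (f\<^sup>2 / m)" by (simp add: power2_eq_square)
  moreover have "(f/m)\<^sup>2 * m = f\<^sup>2 / m" using mp by (simp add: power2_eq_square)
  ultimately have h1: "a\<^sup>2 * m - 2 * a * f + f\<^sup>2 / m \<le> 0" by linarith
  have "m * (a\<^sup>2 * m - 2 * a * f + f\<^sup>2 / m) \<le> 0"
    using mp h1 by (intro mult_nonneg_nonpos) auto
  moreover have "m * (a\<^sup>2 * m - 2 * a * f + f\<^sup>2 / m) = (a * m - f)\<^sup>2"
    using mp by (simp add: power2_eq_square algebra_simps)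
  ultimately have "(a * m - f)\<^sup>2 \<le> 0" by simp
  thus "f = a * m" by simp
qed

lemma CC:
  assumes opt: "optimal_n_means n \<alpha>" and a: "a \<in> \<alpha>" and R[measurable]: "R \<in> sets borel"
    and inR: "AE y in P. y \<in> R \<longrightarrow> dm \<alpha> y = (y - a)\<^sup>2"
    and out: "AE y in P. y \<notin> R \<longrightarrow> (\<exists>c\<in>\<alpha> - {a}. (y - c)\<^sup>2 \<le> dm \<alpha> y)"
  shows "(\<integral>y. indicator R y * y \<partial>P) = a * (\<integral>y. indicator R y \<partial>P)"
proof -
  have fa: "finite \<alpha>" "\<alpha> \<noteq> {}" using opt unfolding optimal_n_means_def by auto
  define m :: real where "m = (\<integral>y. indicator R y \<partial>P)"
  define f where "f = (\<integral>y. indicator R y * y \<partial>P)"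
  define g where "g = (\<integral>y. indicator R y * y\<^sup>2 \<partial>P)"
  have key: "g - 2 * a * f + a\<^sup>2 * m \<le> g - 2 * c * f + c\<^sup>2 * m" for c
  proof -
    have "card ((\<alpha> - {a}) \<union> {c}) \<le> card (\<alpha> - {a}) + 1"
      using card_Un_le[of "\<alpha> - {a}" "{c}"] by simp
    also have "\<dots> = card \<alpha>" using card_Suc_Diff1[OF fa(1) a] by (simp only: Suc_eq_plus1)
    also have "\<dots> \<le> n" using opt unfolding optimal_n_means_def by auto
    finally have cd: "card ((\<alpha> - {a}) \<union> {c}) \<le> n" .
    have "(\<integral>y. indicator R y * dm \<alpha> y \<partial>P) \<le> (\<integral>y. indicator R y * dm {c} y \<partial>P)"
    proof (rule CL[OF opt _ _ _ cd R])
      show "AE y in P. y \<notin> R \<longrightarrow> (\<exists>c\<in>\<alpha> - {a}. (y - c)\<^sup>2 \<le> dm \<alpha> y)" by (rule out)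
    qed (use a in auto)
    moreover have "(\<integral>y. indicator R y * dm \<alpha> y \<partial>P) = (\<integral>y. indicator R y * (y - a)\<^sup>2 \<partial>P)"
    proof (rule integral_cong_AE)
      show "(\<lambda>y. indicator R y * dm \<alpha> y) \<in> borel_measurable P" using dm_meas[OF fa(1)] by simp
      show "(\<lambda>y. indicator R y * (y - a)\<^sup>2) \<in> borel_measurable P" by simp
      show "AE y in P. indicator R y * dm \<alpha> y = indicator R y * (y - a)\<^sup>2"
        using inR by eventually_elim (simp split: split_indicator)
    qed
    moreover have "dm {c} y = (y - c)\<^sup>2" for y by (simp add: dm_def)
    ultimately have "(\<integral>y. indicator R y * (y - a)\<^sup>2 \<partial>P) \<le> (\<integral>y. indicator R y * (y - c)\<^sup>2 \<partial>P)" by simp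
    thus ?thesis unfolding m_def f_def g_def sq_expand[OF R] .
  qed
  have mb: "\<bar>f\<bar> \<le> m" using mass_bound[OF R] by (simp only: f_def m_def)
  have "f = a * m" using moment_lemma[OF mb key] .
  thus ?thesis by (simp only: f_def m_def)
qed


section \<open>Neighbours and regions\<close>

lemma pred_cases:
  fixes \<alpha> :: "real set"
  assumes "finite \<alpha>" "a \<in> \<alpha>"
  shows "(\<forall>c\<in>\<alpha>. a \<le> c) \<or> (\<exists>p\<in>\<alpha>. p < a \<and> (\<forall>c\<in>\<alpha>. c < a \<longrightarrow> c \<le> p))"
proof (cases "\<exists>c\<in>\<alpha>. c < a")
  case True
  define p where "p = Max {c\<in>\<alpha>. c < a}"
  have fin: "finite {c\<in>\<alpha>. c < a}" "{c\<in>\<alpha>. c < a} \<noteq> {}" using assms True by auto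
  have "p \<in> {c\<in>\<alpha>. c < a}" unfolding p_def using fin by (rule Max_in)
  moreover have "\<forall>c\<in>\<alpha>. c < a \<longrightarrow> c \<le> p" unfolding p_def using fin by auto
  ultimately show ?thesis by auto
qed auto

lemma succ_cases:
  fixes \<alpha> :: "real set"
  assumes "finite \<alpha>" "a \<in> \<alpha>"
  shows "(\<forall>c\<in>\<alpha>. c \<le> a) \<or> (\<exists>q\<in>\<alpha>. a < q \<and> (\<forall>c\<in>\<alpha>. a < c \<longrightarrow> q \<le> c))"
proof (cases "\<exists>c\<in>\<alpha>. a < c")
  case True
  define q where "q = Min {c\<in>\<alpha>. a < c}"
  have fin: "finite {c\<in>\<alpha>. a < c}" "{c\<in>\<alpha>. a < c} \<noteq> {}" using assms True by auto
  have "q \<in> {c\<in>\<alpha>. a < c}" unfolding q_def using fin by (rule Min_in)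
  moreover have "\<forall>c\<in>\<alpha>. a < c \<longrightarrow> q \<le> c" unfolding q_def using fin by auto
  ultimately show ?thesis by auto
qed auto

lemma sq_le_iff: "((y::real) - a)\<^sup>2 \<le> (y - c)\<^sup>2 \<longleftrightarrow> (c - a) * (2 * y - a - c) \<le> 0"
  by (simp add: power2_eq_square algebra_simps)

lemma sq_less_iff: "((y::real) - a)\<^sup>2 < (y - c)\<^sup>2 \<longleftrightarrow> (c - a) * (2 * y - a - c) < 0"
  by (simp add: power2_eq_square algebra_simps)

lemma closer_left: "(c::real) < a \<Longrightarrow> a + c \<le> 2 * y \<Longrightarrow> (y - a)\<^sup>2 \<le> (y - c)\<^sup>2"
  unfolding sq_le_iff by (rule mult_nonpos_nonneg) auto

lemma closer_left_strict: "(c::real) < a \<Longrightarrow> 2 * y < a + c \<Longrightarrow> (y - c)\<^sup>2 < (y - a)\<^sup>2"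
  unfolding sq_less_iff by (rule mult_pos_neg) auto

lemma closer_right: "(a::real) < c \<Longrightarrow> 2 * y \<le> a + c \<Longrightarrow> (y - a)\<^sup>2 \<le> (y - c)\<^sup>2"
  unfolding sq_le_iff by (rule mult_nonneg_nonpos) auto

lemma closer_right_strict: "(a::real) < c \<Longrightarrow> a + c < 2 * y \<Longrightarrow> (y - c)\<^sup>2 < (y - a)\<^sup>2"
  unfolding sq_less_iff by (rule mult_neg_pos) auto

definition left_ok :: "real set \<Rightarrow> real \<Rightarrow> real \<Rightarrow> bool" where
  "left_ok \<alpha> a l \<longleftrightarrow> l \<le> a \<and> (\<forall>y. l \<le> y \<longrightarrow> (\<forall>c\<in>\<alpha>. c < a \<longrightarrow> (y - a)\<^sup>2 \<le> (y - c)\<^sup>2))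
     \<and> (\<forall>y. y < l \<longrightarrow> 0 \<le> y \<longrightarrow> (\<exists>c\<in>\<alpha>. c < a \<and> (y - c)\<^sup>2 < (y - a)\<^sup>2))"

definition right_ok :: "real set \<Rightarrow> real \<Rightarrow> real \<Rightarrow> bool" where
  "right_ok \<alpha> a r \<longleftrightarrow> a \<le> r \<and> (\<forall>y. y \<le> r \<longrightarrow> (\<forall>c\<in>\<alpha>. a < c \<longrightarrow> (y - a)\<^sup>2 \<le> (y - c)\<^sup>2))
     \<and> (\<forall>y. r < y \<longrightarrow> y \<le> 1 \<longrightarrow> (\<exists>c\<in>\<alpha>. a < c \<and> (y - c)\<^sup>2 < (y - a)\<^sup>2))"

lemma left_ok_pred:
  assumes "p \<in> \<alpha>" "p < a" "\<forall>c\<in>\<alpha>. c < a \<longrightarrow> c \<le> p"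
  shows "left_ok \<alpha> a ((p + a) / 2)"
  unfolding left_ok_def
proof (intro conjI allI impI ballI)
  show "(p + a) / 2 \<le> a" using assms by simp
next
  fix y c assume "(p + a) / 2 \<le> y" "c \<in> \<alpha>" "c < a"
  thus "(y - a)\<^sup>2 \<le> (y - c)\<^sup>2" using assms by (intro closer_left) auto
next
  fix y assume "y < (p + a) / 2"
  thus "\<exists>c\<in>\<alpha>. c < a \<and> (y - c)\<^sup>2 < (y - a)\<^sup>2" using assms closer_left_strict[of p a y] by auto
qed

lemma left_ok_none:
  assumes "\<forall>c\<in>\<alpha>. a \<le> c"
  shows "left_ok \<alpha> a (min 0 a)"
  using assms unfolding left_ok_def by force

lemma right_ok_succ:
  assumes "q \<in> \<alpha>" "a < q" "\<forall>c\<in>\<alpha>. a < c \<longrightarrow> q \<le> c"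
  shows "right_ok \<alpha> a ((a + q) / 2)"
  unfolding right_ok_def
proof (intro conjI allI impI ballI)
  show "a \<le> (a + q) / 2" using assms by simp
next
  fix y c assume "y \<le> (a + q) / 2" "c \<in> \<alpha>" "a < c"
  thus "(y - a)\<^sup>2 \<le> (y - c)\<^sup>2" using assms by (intro closer_right) auto
next
  fix y assume "(a + q) / 2 < y"
  thus "\<exists>c\<in>\<alpha>. a < c \<and> (y - c)\<^sup>2 < (y - a)\<^sup>2" using assms closer_right_strict[of a q y] by auto
qed

lemma right_ok_none:
  assumes "\<forall>c\<in>\<alpha>. c \<le> a"
  shows "right_ok \<alpha> a (max 1 a)"
  using assms unfolding right_ok_def by force

lemma left_ok_ex: "finite \<alpha> \<Longrightarrow> a \<in> \<alpha> \<Longrightarrow> \<exists>l. left_ok \<alpha> a l"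
proof -
  assume "finite \<alpha>" "a \<in> \<alpha>"
  from pred_cases[OF this] show ?thesis
  proof
    assume "\<forall>c\<in>\<alpha>. a \<le> c"
    hence "left_ok \<alpha> a (min 0 a)" by (rule left_ok_none)
    thus ?thesis ..
  next
    assume "\<exists>p\<in>\<alpha>. p < a \<and> (\<forall>c\<in>\<alpha>. c < a \<longrightarrow> c \<le> p)"
    then obtain p where "p \<in> \<alpha>" "p < a" "\<forall>c\<in>\<alpha>. c < a \<longrightarrow> c \<le> p" by auto
    hence "left_ok \<alpha> a ((p + a) / 2)" by (intro left_ok_pred)
    thus ?thesis ..
  qed
qed

lemma right_ok_ex: "finite \<alpha> \<Longrightarrow> a \<in> \<alpha> \<Longrightarrow> \<exists>r. right_ok \<alpha> a r"
proof -
  assume "finite \<alpha>" "a \<in> \<alpha>"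
  from succ_cases[OF this] show ?thesis
  proof
    assume "\<forall>c\<in>\<alpha>. c \<le> a"
    hence "right_ok \<alpha> a (max 1 a)" by (rule right_ok_none)
    thus ?thesis ..
  next
    assume "\<exists>q\<in>\<alpha>. a < q \<and> (\<forall>c\<in>\<alpha>. a < c \<longrightarrow> q \<le> c)"
    then obtain q where "q \<in> \<alpha>" "a < q" "\<forall>c\<in>\<alpha>. a < c \<longrightarrow> q \<le> c" by auto
    hence "right_ok \<alpha> a ((a + q) / 2)" by (intro right_ok_succ)
    thus ?thesis ..
  qed
qed

lemma region_in:
  assumes "left_ok \<alpha> a l" "right_ok \<alpha> a r" "l \<le> y" "y \<le> r" "c \<in> \<alpha>"
  shows "(y - a)\<^sup>2 \<le> (y - c)\<^sup>2"
  using assms unfolding left_ok_def right_ok_def by (cases "c < a"; cases "a < c") auto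

lemma region_out:
  assumes "left_ok \<alpha> a l" "right_ok \<alpha> a r" "0 \<le> y" "y \<le> 1" "\<not> (l \<le> y \<and> y \<le> r)"
  shows "\<exists>c\<in>\<alpha> - {a}. (y - c)\<^sup>2 \<le> (y - a)\<^sup>2"
proof (cases "y < l")
  case True
  then obtain c where "c \<in> \<alpha>" "c < a" "(y - c)\<^sup>2 < (y - a)\<^sup>2" using assms unfolding left_ok_def by blast
  thus ?thesis by (intro bexI[of _ c]) auto
next
  case False
  hence "r < y" using assms by auto
  then obtain c where "c \<in> \<alpha>" "a < c" "(y - c)\<^sup>2 < (y - a)\<^sup>2" using assms unfolding right_ok_def by blast
  thus ?thesis by (intro bexI[of _ c]) auto
qed

section \<open>Moments\<close>

definition M0 :: "real set \<Rightarrow> real" where "M0 E = (\<integral>y. indicator E y \<partial>P)"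
definition M1 :: "real set \<Rightarrow> real" where "M1 E = (\<integral>y. indicator E y * y \<partial>P)"
definition M2 :: "real set \<Rightarrow> real" where "M2 E = (\<integral>y. indicator E y * y\<^sup>2 \<partial>P)"

lemma sq_expand': "E \<in> sets borel \<Longrightarrow> (\<integral>y. indicator E y * (y - c)\<^sup>2 \<partial>P) = M2 E - 2 * c * M1 E + c\<^sup>2 * M0 E"
  unfolding M0_def M1_def M2_def by (rule sq_expand)

lemma ind_cong:
  fixes h :: "real \<Rightarrow> real"
  assumes [measurable]: "E \<in> sets borel" "F \<in> sets borel" "h \<in> borel_measurable borel"
    and eq: "\<And>y. y \<in> Supp \<Longrightarrow> y \<noteq> z \<Longrightarrow> y \<in> E \<longleftrightarrow> y \<in> F"
  shows "(\<integral>y. indicator E y * h y \<partial>P) = (\<integral>y. indicator F y * h y \<partial>P)"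
proof (rule integral_cong_AE)
  show "AE y in P. indicator E y * h y = indicator F y * h y"
    using AE_Supp AE_neq[of z] by eventually_elim (use eq in \<open>auto split: split_indicator\<close>)
qed auto

lemma M_cong:
  assumes "E \<in> sets borel" "F \<in> sets borel" "\<And>y. y \<in> Supp \<Longrightarrow> y \<noteq> z \<Longrightarrow> y \<in> E \<longleftrightarrow> y \<in> F"
  shows "M0 E = M0 F" "M1 E = M1 F" "M2 E = M2 F"
  using ind_cong[OF assms(1,2) _ assms(3), of "\<lambda>_. 1"] ind_cong[OF assms(1,2) _ assms(3), of "\<lambda>y. y"]
    ind_cong[OF assms(1,2) _ assms(3), of "\<lambda>y. y\<^sup>2"]
  unfolding M0_def M1_def M2_def by auto

lemma int_ind_cont:
  fixes h :: "real \<Rightarrow> real"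
  shows "E \<in> sets borel \<Longrightarrow> continuous_on UNIV h \<Longrightarrow> integrable P (\<lambda>y. indicator E y * h y)"
  by (rule int_ind_poly)

lemma M_add:
  assumes [measurable]: "E \<in> sets borel" "F \<in> sets borel" and disj: "E \<inter> F = {}"
  shows "M0 (E \<union> F) = M0 E + M0 F" "M1 (E \<union> F) = M1 E + M1 F" "M2 (E \<union> F) = M2 E + M2 F"
proof -
  have ind: "indicator (E \<union> F) y = (indicator E y + indicator F y :: real)" for y
    using disj by (auto split: split_indicator)
  have i0: "integrable P (\<lambda>y. indicator G y :: real)" if "G \<in> sets borel" for G
    using int_ind_cont[OF that, of "\<lambda>_. 1"] by simp
  have i1: "integrable P (\<lambda>y. indicator G y * y)" if "G \<in> sets borel" for G
    using int_ind_cont[OF that, of "\<lambda>y. y"] by (simp add: continuous_on_id)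
  have i2: "integrable P (\<lambda>y. indicator G y * y\<^sup>2)" if "G \<in> sets borel" for G
    using int_ind_cont[OF that, of "\<lambda>y. y\<^sup>2"] by (simp add: continuous_intros)
  show "M0 (E \<union> F) = M0 E + M0 F" unfolding M0_def ind
    using i0[of E] i0[of F] by simp
  show "M1 (E \<union> F) = M1 E + M1 F" unfolding M1_def ind
    using i1[of E] i1[of F] by (simp add: distrib_right)
  show "M2 (E \<union> F) = M2 E + M2 F" unfolding M2_def ind
    using i2[of E] i2[of F] by (simp add: distrib_right)
qed

lemma M0_nonneg: "0 \<le> M0 E"
  unfolding M0_def by (rule integral_nonneg_AE) auto

lemma M1_bounds:
  assumes [measurable]: "E \<in> sets borel" and h: "\<And>y. y \<in> Supp \<Longrightarrow> y \<in> E \<Longrightarrow> u \<le> y \<and> y \<le> v"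
  shows "u * M0 E \<le> M1 E" "M1 E \<le> v * M0 E"
proof -
  have i0: "integrable P (\<lambda>y. indicator E y * u)" "integrable P (\<lambda>y. indicator E y * v)"
    using int_ind_cont[of E "\<lambda>_. u"] int_ind_cont[of E "\<lambda>_. v"] by auto
  have i1: "integrable P (\<lambda>y. indicator E y * y)"
    using int_ind_cont[of E "\<lambda>y. y"] by (simp add: continuous_on_id)
  have "(\<integral>y. indicator E y * u \<partial>P) \<le> M1 E" unfolding M1_def
    by (rule integral_mono_AE[OF i0(1) i1]) (use AE_Supp h in \<open>auto elim!: eventually_mono split: split_indicator\<close>)
  thus "u * M0 E \<le> M1 E" unfolding M0_def by (simp add: mult.commute)
  have "M1 E \<le> (\<integral>y. indicator E y * v \<partial>P)" unfolding M1_def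
    by (rule integral_mono_AE[OF i1 i0(2)]) (use AE_Supp h in \<open>auto elim!: eventually_mono split: split_indicator\<close>)
  thus "M1 E \<le> v * M0 E" unfolding M0_def by (simp add: mult.commute)
qed

lemma M0_mono:
  assumes [measurable]: "E \<in> sets borel" "F \<in> sets borel" and h: "\<And>y. y \<in> Supp \<Longrightarrow> y \<in> E \<Longrightarrow> y \<in> F"
  shows "M0 E \<le> M0 F"
  unfolding M0_def
proof (rule integral_mono_AE)
  show "integrable P (indicat_real E)" "integrable P (indicat_real F)"
    using int_ind_cont[of E "\<lambda>_. 1"] int_ind_cont[of F "\<lambda>_. 1"] by auto
  show "AE x in P. indicat_real E x \<le> indicat_real F x"
    using AE_Supp by eventually_elim (use h in \<open>auto split: split_indicator\<close>)
qed

lemma M_piece: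
  assumes "1 \<le> m" "u \<le> v" "J0 m \<le> u" "v \<le> J1 m"
  shows "M0 {u..v} = (3/2) ^ m * (v - u)" "M1 {u..v} = (3/2) ^ m * ((v\<^sup>2 - u\<^sup>2) / 2)"
proof -
  have "M0 {u..v} = (3/2) ^ m * ((\<lambda>x. x) v - (\<lambda>x. x) u)"
    unfolding M0_def using int_piece[OF assms, of "\<lambda>x. x" "\<lambda>_. 1"]
    by (auto intro!: derivative_eq_intros)
  thus "M0 {u..v} = (3/2) ^ m * (v - u)" by simp
  have der: "((\<lambda>x. x\<^sup>2/2) has_real_derivative x) (at x)" for x :: real
    by (auto intro!: derivative_eq_intros)
  have "M1 {u..v} = (3/2) ^ m * ((\<lambda>x. x\<^sup>2/2) v - (\<lambda>x. x\<^sup>2/2) u)"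
    unfolding M1_def using int_piece[OF assms, of "\<lambda>x. x\<^sup>2/2" "\<lambda>x. x", OF der] by (simp add: continuous_on_id)
  thus "M1 {u..v} = (3/2) ^ m * ((v\<^sup>2 - u\<^sup>2) / 2)" by (simp add: diff_divide_distrib)
qed

lemma M0_tail: "1 \<le> m \<Longrightarrow> M0 {J0 m..1} = (1/2) ^ m * 2"
  unfolding M0_def using measure_P_tail[of m] by simp


lemma dm_eq_near:
  assumes "finite \<alpha>" "a \<in> \<alpha>" "\<forall>c\<in>\<alpha>. (y - a)\<^sup>2 \<le> (y - c)\<^sup>2"
  shows "dm \<alpha> y = (y - a)\<^sup>2"
proof -
  obtain c where "c \<in> \<alpha>" "dm \<alpha> y = (y - c)\<^sup>2" using dm_ex[of \<alpha> y] assms by auto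
  thus ?thesis using dm_le[OF assms(1,2), of y] assms(3) by force
qed

lemma outc:
  assumes "finite \<alpha>" "U \<subseteq> \<alpha>" "c \<in> \<alpha> - U" "\<forall>u\<in>U. (y - c)\<^sup>2 \<le> (y - u)\<^sup>2"
  shows "\<exists>c\<in>\<alpha> - U. (y - c)\<^sup>2 \<le> dm \<alpha> y"
proof -
  obtain d where d: "d \<in> \<alpha>" "dm \<alpha> y = (y - d)\<^sup>2" using dm_ex[of \<alpha> y] assms by auto
  show ?thesis
  proof (cases "d \<in> U")
    case True thus ?thesis using assms d by force
  next
    case False thus ?thesis using d by force
  qed
qed

lemma W_exists:
  fixes \<alpha> :: "real set"
  assumes "finite \<alpha>"
  shows "\<exists>\<epsilon> z. 0 < \<epsilon> \<and> 0 \<le> z - \<epsilon> \<and> z + \<epsilon> \<le> 1/3 \<and>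
    (\<forall>y c. \<bar>y - z\<bar> \<le> \<epsilon> \<longrightarrow> c \<in> \<alpha> \<longrightarrow> 9 * \<epsilon>\<^sup>2 \<le> (y - c)\<^sup>2)"
proof -
  have "infinite {0<..<1/3::real}" by simp
  hence "\<not> {0<..<1/3::real} \<subseteq> \<alpha>" using assms finite_subset by blast
  then obtain z where "z \<in> {0<..<1/3::real}" "z \<notin> \<alpha>" by blast
  hence z: "0 < z" "z < 1/3" "z \<notin> \<alpha>" by auto
  define \<delta> where "\<delta> = Min (insert 1 ((\<lambda>c. \<bar>z - c\<bar>) ` \<alpha>))"
  have fin: "finite (insert 1 ((\<lambda>c. \<bar>z - c\<bar>) ` \<alpha>))" using assms by simp
  have dpos: "0 < \<delta>" unfolding \<delta>_def using fin z by (subst Min_gr_iff) auto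
  have dle: "\<delta> \<le> \<bar>z - c\<bar>" if "c \<in> \<alpha>" for c unfolding \<delta>_def using fin that by (intro Min_le) auto
  define \<epsilon> where "\<epsilon> = min (\<delta>/4) (min (z/2) ((1/3 - z)/2))"
  have e1: "\<epsilon> \<le> \<delta>/4" unfolding \<epsilon>_def by (rule min.cobounded1)
  have e2: "\<epsilon> \<le> min (z/2) ((1/3 - z)/2)" unfolding \<epsilon>_def by (rule min.cobounded2)
  have e3: "\<epsilon> \<le> z/2" using e2 min.cobounded1 order_trans by blast
  have e4: "\<epsilon> \<le> (1/3 - z)/2" using e2 min.cobounded2 order_trans by blast
  have e0: "0 < \<epsilon>" unfolding \<epsilon>_def using dpos z by simp
  note ep = e0 e1 e3 e4
  have "\<forall>y c. \<bar>y - z\<bar> \<le> \<epsilon> \<longrightarrow> c \<in> \<alpha> \<longrightarrow> 9 * \<epsilon>\<^sup>2 \<le> (y - c)\<^sup>2"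
  proof (intro allI impI)
    fix y c assume y: "\<bar>y - z\<bar> \<le> \<epsilon>" and c: "c \<in> \<alpha>"
    have "3 * \<epsilon> \<le> \<bar>y - c\<bar>" using dle[OF c] ep y by linarith
    hence "(3 * \<epsilon>)\<^sup>2 \<le> \<bar>y - c\<bar>\<^sup>2" using ep by (intro power_mono) auto
    thus "9 * \<epsilon>\<^sup>2 \<le> (y - c)\<^sup>2" by (simp add: power_mult_distrib)
  qed
  moreover have "0 < \<epsilon>" "0 \<le> z - \<epsilon>" "z + \<epsilon> \<le> 1/3" using ep z by auto
  ultimately show ?thesis by blast
qed

lemma M0_measure: "E \<in> sets borel \<Longrightarrow> M0 E = measure P E"
  unfolding M0_def by simp

lemma CC_int:
  assumes opt: "optimal_n_means n \<alpha>" and a: "a \<in> \<alpha>"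
    and hin: "\<And>y. y \<in> Supp \<Longrightarrow> l \<le> y \<Longrightarrow> y \<le> r \<Longrightarrow> \<forall>c\<in>\<alpha>. (y - a)\<^sup>2 \<le> (y - c)\<^sup>2"
    and hout: "\<And>y. y \<in> Supp \<Longrightarrow> \<not> (l \<le> y \<and> y \<le> r) \<Longrightarrow> \<exists>c\<in>\<alpha> - {a}. (y - c)\<^sup>2 \<le> (y - a)\<^sup>2"
  shows "M1 {l..r} = a * M0 {l..r}" "0 < M0 {l..r}"
proof -
  have fa: "finite \<alpha>" "\<alpha> \<noteq> {}" using opt unfolding optimal_n_means_def by auto
  have inR: "AE y in P. y \<in> {l..r} \<longrightarrow> dm \<alpha> y = (y - a)\<^sup>2"
    using AE_Supp by eventually_elim (use hin dm_eq_near[OF fa(1) a] in auto)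
  have out: "AE y in P. y \<notin> {l..r} \<longrightarrow> (\<exists>c\<in>\<alpha> - {a}. (y - c)\<^sup>2 \<le> dm \<alpha> y)"
    using AE_Supp
  proof eventually_elim
    case (elim y)
    show ?case
    proof
      assume "y \<notin> {l..r}"
      then obtain c where "c \<in> \<alpha> - {a}" "(y - c)\<^sup>2 \<le> (y - a)\<^sup>2" using hout[OF elim] by auto
      thus "\<exists>c\<in>\<alpha> - {a}. (y - c)\<^sup>2 \<le> dm \<alpha> y" using outc[OF fa(1), of "{a}" c y] a by auto
    qed
  qed
  show "M1 {l..r} = a * M0 {l..r}"
    unfolding M0_def M1_def by (rule CC[OF opt a _ inR out]) simp
  show "0 < M0 {l..r}"
  proof (rule ccontr)
    assume "\<not> 0 < M0 {l..r}"
    hence m0: "M0 {l..r} = 0" using M0_nonneg[of "{l..r}"] by simp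
    hence "measure P {l..r} = 0" by (simp add: M0_measure)
    hence "{l..r} \<in> null_sets P" by (simp add: Pprob.emeasure_eq_measure null_sets_def)
    hence nul: "AE y in P. y \<notin> {l..r}" by (rule AE_not_in)
    obtain \<epsilon> z where ze: "0 < \<epsilon>" "0 \<le> z - \<epsilon>" "z + \<epsilon> \<le> 1/3"
      "\<And>y c. \<bar>y - z\<bar> \<le> \<epsilon> \<Longrightarrow> c \<in> \<alpha> \<Longrightarrow> 9 * \<epsilon>\<^sup>2 \<le> (y - c)\<^sup>2"
      using W_exists[OF fa(1)] by blast
    define W where "W = {z - \<epsilon> .. z + \<epsilon>}"
    define R where "R = {l..r} \<union> W"
    have card: "card ((\<alpha> - {a}) \<union> {z}) \<le> n"
    proof -
      have "card ((\<alpha> - {a}) \<union> {z}) \<le> card (\<alpha> - {a}) + 1"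
        using card_Un_le[of "\<alpha> - {a}" "{z}"] by simp
      also have "\<dots> = card \<alpha>" using card_Suc_Diff1[OF fa(1) a] by (simp only: Suc_eq_plus1)
      also have "\<dots> \<le> n" using opt unfolding optimal_n_means_def by auto
      finally show ?thesis .
    qed
    have outR: "AE y in P. y \<notin> R \<longrightarrow> (\<exists>c\<in>\<alpha> - {a}. (y - c)\<^sup>2 \<le> dm \<alpha> y)"
      using out by eventually_elim (auto simp: R_def)
    have le: "(\<integral>y. indicator R y * dm \<alpha> y \<partial>P) \<le> (\<integral>y. indicator R y * dm {z} y \<partial>P)"
      by (rule CL[OF opt _ _ _ card _ outR]) (use a in \<open>auto simp: R_def W_def\<close>)
    have dz: "dm {z} y = (y - z)\<^sup>2" for y by (simp add: dm_def)
    have e1: "(\<integral>y. indicator R y * dm \<alpha> y \<partial>P) = (\<integral>y. indicator W y * dm \<alpha> y \<partial>P)"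
      by (rule integral_cong_AE) (use nul dm_meas[OF fa(1)] in \<open>auto simp: R_def W_def elim!: eventually_mono split: split_indicator\<close>)
    have e2: "(\<integral>y. indicator R y * dm {z} y \<partial>P) = (\<integral>y. indicator W y * (y - z)\<^sup>2 \<partial>P)"
      unfolding dz
      by (rule integral_cong_AE) (use nul in \<open>auto simp: R_def W_def elim!: eventually_mono split: split_indicator\<close>)
    have Wsub: "W \<subseteq> J 1" using ze unfolding W_def J_def J0_def J1_def by auto
    have MW: "M0 W = (3/2) ^ 1 * ((z + \<epsilon>) - (z - \<epsilon>))"
      unfolding W_def using ze by (intro M_piece(1)) (auto simp: J0_def J1_def)
    have iW1: "integrable P (\<lambda>y. indicator W y * dm \<alpha> y)"
      by (rule int_ind[OF _ dm_int[OF fa]]) (simp add: W_def)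
    have iW2: "integrable P (\<lambda>y. indicator W y * (y - z)\<^sup>2)"
      by (rule int_ind_cont) (auto simp: W_def intro!: continuous_intros)
    have iW3: "integrable P (\<lambda>y. indicator W y * (8 * \<epsilon>\<^sup>2))"
      by (rule int_ind_cont) (auto simp: W_def)
    have "(\<integral>y. indicator W y * (8 * \<epsilon>\<^sup>2) \<partial>P) + (\<integral>y. indicator W y * (y - z)\<^sup>2 \<partial>P)
          = (\<integral>y. indicator W y * (8 * \<epsilon>\<^sup>2) + indicator W y * (y - z)\<^sup>2 \<partial>P)"
      using iW2 iW3 by simp
    also have "\<dots> \<le> (\<integral>y. indicator W y * dm \<alpha> y \<partial>P)"
    proof (rule integral_mono)
      show "integrable P (\<lambda>y. indicator W y * (8 * \<epsilon>\<^sup>2) + indicator W y * (y - z)\<^sup>2)" using iW2 iW3 by simp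
      show "integrable P (\<lambda>y. indicator W y * dm \<alpha> y)" by (rule iW1)
      fix y
      show "indicator W y * (8 * \<epsilon>\<^sup>2) + indicator W y * (y - z)\<^sup>2 \<le> indicator W y * dm \<alpha> y"
      proof (cases "y \<in> W")
        case True
        hence yz: "\<bar>y - z\<bar> \<le> \<epsilon>" unfolding W_def by auto
        obtain c where c: "c \<in> \<alpha>" "dm \<alpha> y = (y - c)\<^sup>2" using dm_ex[OF fa, of y] by auto
        have "9 * \<epsilon>\<^sup>2 \<le> dm \<alpha> y" using ze(4)[OF yz c(1)] c by simp
        moreover have "(y - z)\<^sup>2 \<le> \<epsilon>\<^sup>2" using yz ze
          by (metis abs_le_square_iff abs_of_pos power2_abs)
        ultimately show ?thesis using True by simp
      qed simp
    qed
    also have "\<dots> \<le> (\<integral>y. indicator W y * (y - z)\<^sup>2 \<partial>P)" using le e1 e2 by simp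
    finally have "(\<integral>y. indicator W y * (8 * \<epsilon>\<^sup>2) \<partial>P) \<le> 0" by simp
    moreover have "(\<integral>y. indicator W y * (8 * \<epsilon>\<^sup>2) \<partial>P) = 8 * \<epsilon>\<^sup>2 * M0 W"
      unfolding M0_def by simp
    moreover have "M0 W = measure P W" by (simp add: M0_measure W_def)
    ultimately have "8 * \<epsilon>\<^sup>2 * M0 W \<le> 0" by (simp add: mult.commute)
    moreover have "0 < M0 W" using MW ze by simp
    hence "0 < 8 * \<epsilon>\<^sup>2 * M0 W" using ze by simp
    ultimately show False by linarith
  qed
qed


lemma I2_alg:
  fixes w L x0 b fB s q gA gB :: real
  assumes w: "0 < w" and L: "0 < L" and b: "0 < b" "b \<le> w"
    and fB: "(x0 + 2*L) * b \<le> fB" "fB \<le> (x0 + 3*L) * b"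
    and q: "x0 + 2*L \<le> q" "q \<le> x0 + 3*L"
    and s: "s * (w + b) = w * (x0 + L/2) + fB"
    and hyp: "(gA + gB) - 2 * s * (w * (x0 + L/2) + fB) + s\<^sup>2 * (w + b)
       \<le> (gA - 2 * (x0 + L/2) * (w * (x0 + L/2)) + (x0 + L/2)\<^sup>2 * w) + (gB - 2 * q * fB + q\<^sup>2 * b)"
  shows False
proof -
  define X where "X = fB - b * (x0 + L/2)"
  define Y where "Y = q * b - fB"
  define F where "F = w * (x0 + L/2) + fB"
  define Z where "Z = - 2 * s * F + s\<^sup>2 * (w + b) + w * (x0 + L/2)\<^sup>2 + 2 * q * fB - q\<^sup>2 * b"
  have "Z = ((gA + gB) - 2 * s * (w * (x0 + L/2) + fB) + s\<^sup>2 * (w + b))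
       - ((gA - 2 * (x0 + L/2) * (w * (x0 + L/2)) + (x0 + L/2)\<^sup>2 * w) + (gB - 2 * q * fB + q\<^sup>2 * b))"
    unfolding Z_def F_def by (simp add: power2_eq_square field_simps)
  hence Zle: "Z \<le> 0" using hyp by linarith
  have sF: "s * (w + b) = F" using s unfolding F_def .
  have z1: "(w + b) * (- 2 * s * F + s\<^sup>2 * (w + b)) = - 2 * F * (s * (w + b)) + (s * (w + b))\<^sup>2"
    by (simp add: power2_eq_square algebra_simps)
  have z2: "(w + b) * Z = - F\<^sup>2 + (w + b) * (w * (x0 + L/2)\<^sup>2 + 2 * q * fB - q\<^sup>2 * b)"
    using z1 unfolding sF Z_def by (simp add: power2_eq_square algebra_simps)
  have z3: "b * (- F\<^sup>2 + (w + b) * (w * (x0 + L/2)\<^sup>2 + 2 * q * fB - q\<^sup>2 * b)) = X\<^sup>2 * w - Y\<^sup>2 * (w + b)"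
    unfolding F_def X_def Y_def by (simp add: power2_eq_square algebra_simps)
  have "b * ((w + b) * Z) \<le> 0" using Zle w b by (simp add: mult_nonneg_nonpos)
  hence neg: "X\<^sup>2 * w - Y\<^sup>2 * (w + b) \<le> 0" using z2 z3 by simp
  have X1: "3/2 * L * b \<le> X" unfolding X_def using fB by (simp add: algebra_simps)
  have q1: "b * q \<le> b * (x0 + 3*L)" "b * (x0 + 2*L) \<le> b * q" using q b by (auto intro: mult_left_mono)
  have Y1: "\<bar>Y\<bar> \<le> L * b" unfolding Y_def using fB q1
    by (auto simp: abs_le_iff algebra_simps)
  have "(3/2 * L * b)\<^sup>2 \<le> X\<^sup>2" using X1 L b by (intro power_mono) auto
  moreover have "(3/2 * L * b)\<^sup>2 = 9/4 * (L\<^sup>2 * b\<^sup>2)" by (simp add: power2_eq_square)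
  ultimately have X2: "9/4 * (L\<^sup>2 * b\<^sup>2) \<le> X\<^sup>2" by simp
  have Y2: "Y\<^sup>2 \<le> L\<^sup>2 * b\<^sup>2"
    using power_mono[OF Y1, of 2] by (simp add: power_mult_distrib)
  have "9/4 * (L\<^sup>2 * b\<^sup>2) * w \<le> X\<^sup>2 * w" using X2 w by (intro mult_right_mono) auto
  moreover have "Y\<^sup>2 * (w + b) \<le> (L\<^sup>2 * b\<^sup>2) * (2 * w)" using Y2 b by (intro mult_mono) auto
  moreover have "0 < L\<^sup>2 * b\<^sup>2 * w" using L b w by simp
  ultimately show False using neg by linarith
qed

lemma bracket_pos:
  fixes X E L :: real
  assumes "0 \<le> E" "E < X" "X < L" "2 * L < 3 * X - E"
  shows "(X - E) * (L - E) < (2 * X - E - L) * (3 * L - X)"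
proof -
  define f where "f = (\<lambda>E. (2 * X - E - L) * (3 * L - X) - (X - E) * (L - E))"
  define E' where "E' = 3 * X - 2 * L"
  have "f E - f E' = (E' - E) * (2 * L - 2 * X + E' + E)"
    unfolding f_def by (simp add: algebra_simps power2_eq_square)
  moreover have "0 < (E' - E) * (2 * L - 2 * X + E' + E)"
    using assms unfolding E'_def by (intro mult_pos_pos) auto
  moreover have "f E' = (L - X) * (5 * X - 3 * L)" unfolding f_def E'_def by (simp add: algebra_simps)
  moreover have "0 < (L - X) * (5 * X - 3 * L)" using assms by (intro mult_pos_pos) auto
  ultimately have "0 < f E" by linarith
  thus ?thesis unfolding f_def by simp
qed

lemma I1_alg:
  fixes \<rho> L x0 e mid b fB s t1 gD gA gB :: real
  assumes \<rho>: "0 < \<rho>" and L: "0 < L" and e: "x0 \<le> e" "e < mid" and mid: "mid < x0 + L"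
    and b: "0 < b" and fB: "(x0 + 2*L) * b \<le> fB"
    and t1: "t1 = (e + mid) / 2" and s: "s = 2 * mid - t1" and sg: "x0 + L < s"
    and CC: "s * (\<rho> * (x0 + L - mid) + b) = \<rho> * (((x0 + L)\<^sup>2 - mid\<^sup>2) / 2) + fB"
    and hyp: "(gD - 2 * t1 * (\<rho> * ((mid\<^sup>2 - e\<^sup>2) / 2)) + t1\<^sup>2 * (\<rho> * (mid - e)))
      + ((gA + gB) - 2 * s * (\<rho> * (((x0 + L)\<^sup>2 - mid\<^sup>2) / 2) + fB) + s\<^sup>2 * (\<rho> * (x0 + L - mid) + b))
      \<le> ((gD + gA) - 2 * ((e + x0 + L) / 2) * (\<rho> * ((mid\<^sup>2 - e\<^sup>2) / 2) + \<rho> * (((x0 + L)\<^sup>2 - mid\<^sup>2) / 2))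
           + ((e + x0 + L) / 2)\<^sup>2 * (\<rho> * (mid - e) + \<rho> * (x0 + L - mid)))
        + (gB - 2 * (fB / b) * fB + (fB / b)\<^sup>2 * b)"
  shows False
proof -
  define mD where "mD = \<rho> * (mid - e)"
  define fD where "fD = \<rho> * ((mid\<^sup>2 - e\<^sup>2) / 2)"
  define mA where "mA = \<rho> * (x0 + L - mid)"
  define \<mu> where "\<mu> = (x0 + L + mid) / 2"
  define fA where "fA = \<rho> * (((x0 + L)\<^sup>2 - mid\<^sup>2) / 2)"
  define c1 where "c1 = (e + x0 + L) / 2"
  define c2 where "c2 = fB / b"
  define F where "F = fA + fB"
  have fA_eq: "fA = mA * \<mu>" unfolding fA_def mA_def \<mu>_def by (simp add: power2_eq_square field_simps)
  have fD_eq: "fD = mD * t1" unfolding fD_def mD_def t1 by (simp add: power2_eq_square algebra_simps)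
  have mApos: "0 < mA" unfolding mA_def using \<rho> mid by simp
  have mDpos: "0 < mD" unfolding mD_def using \<rho> e by simp
  define ZD where "ZD = - 2 * t1 * fD + t1\<^sup>2 * mD + 2 * c1 * fD - c1\<^sup>2 * mD"
  define ZE where "ZE = - 2 * s * F + s\<^sup>2 * (mA + b) + 2 * c1 * fA - c1\<^sup>2 * mA + 2 * c2 * fB - c2\<^sup>2 * b"
  have "ZD + ZE \<le> 0"
  proof -
    have "ZD + ZE = ((gD - 2 * t1 * fD + t1\<^sup>2 * mD) + ((gA + gB) - 2 * s * F + s\<^sup>2 * (mA + b)))
      - (((gD + gA) - 2 * c1 * (fD + fA) + c1\<^sup>2 * (mD + mA)) + (gB - 2 * c2 * fB + c2\<^sup>2 * b))"
      unfolding ZD_def ZE_def by (simp add: algebra_simps)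
    thus ?thesis using hyp unfolding mD_def fD_def mA_def fA_def c1_def c2_def F_def by linarith
  qed
  have ZD_eq: "ZD = - mD * (c1 - t1)\<^sup>2" unfolding ZD_def fD_eq by (simp add: power2_eq_square algebra_simps)
  have sF: "s * (mA + b) = F" using CC unfolding mA_def fA_def F_def by simp
  have z1: "(mA + b) * (- 2 * s * F + s\<^sup>2 * (mA + b)) = - 2 * F * (s * (mA + b)) + (s * (mA + b))\<^sup>2"
    by (simp add: power2_eq_square algebra_simps)
  hence z1': "(mA + b) * (- 2 * s * F + s\<^sup>2 * (mA + b)) = - F\<^sup>2" unfolding sF by (simp add: power2_eq_square)
  have z2: "b * (2 * c2 * fB - c2\<^sup>2 * b) = fB\<^sup>2" unfolding c2_def using b by (simp add: power2_eq_square field_simps)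
  have z3: "b * (mA + b) * ZE = b * (mA + b) * (2 * c1 * fA - c1\<^sup>2 * mA) + b * ((mA + b) * (- 2 * s * F + s\<^sup>2 * (mA + b))) + (mA + b) * (b * (2 * c2 * fB - c2\<^sup>2 * b))"
    unfolding ZE_def by (simp add: algebra_simps)
  have z4: "b * (mA + b) * ZE = b * (mA + b) * (- mA * (c1 - \<mu>)\<^sup>2) + mA * (fB - b * \<mu>)\<^sup>2"
  proof -
    have "b * (mA + b) * ZE = b * (mA + b) * (2 * c1 * fA - c1\<^sup>2 * mA) + b * (- F\<^sup>2) + (mA + b) * fB\<^sup>2"
      using z3 z1' z2 by simp
    also have "\<dots> = b * (mA + b) * (- mA * (c1 - \<mu>)\<^sup>2) + mA * (fB - b * \<mu>)\<^sup>2"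
      unfolding F_def fA_eq by (simp add: power2_eq_square algebra_simps)
    finally show ?thesis .
  qed
  have cc2: "fB - b * \<mu> = (s - \<mu>) * (mA + b)"
  proof -
    have "(s - \<mu>) * (mA + b) = s * (mA + b) - \<mu> * (mA + b)" by (simp add: algebra_simps)
    also have "\<dots> = (mA * \<mu> + fB) - \<mu> * (mA + b)" using sF unfolding F_def fA_eq by simp
    also have "\<dots> = fB - b * \<mu>" by (simp add: algebra_simps)
    finally show ?thesis by simp
  qed
  have sm: "0 \<le> s - \<mu>" using sg mid unfolding \<mu>_def by simp
  have fbm: "b * (x0 + 2 * L - \<mu>) \<le> fB - b * \<mu>" using fB by (simp add: algebra_simps)
  have "mA * (s - \<mu>) * (mA + b) * (b * (x0 + 2 * L - \<mu>)) \<le> mA * (s - \<mu>) * (mA + b) * (fB - b * \<mu>)"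
    using fbm mApos sm b by (intro mult_left_mono) auto
  also have "\<dots> = mA * (fB - b * \<mu>)\<^sup>2" unfolding cc2 by (simp add: power2_eq_square algebra_simps)
  finally have z5: "b * (mA + b) * (mA * (s - \<mu>) * (x0 + 2 * L - \<mu>)) \<le> mA * (fB - b * \<mu>)\<^sup>2"
    by (simp add: algebra_simps)
  define Q where "Q = - mD * (c1 - t1)\<^sup>2 - mA * (c1 - \<mu>)\<^sup>2 + mA * (s - \<mu>) * (x0 + 2 * L - \<mu>)"
  have Qeq: "Q = \<rho> * (x0 + L - mid) / 4 * ((2 * (mid - x0) - (e - x0) - L) * (3 * L - (mid - x0)) - ((mid - x0) - (e - x0)) * (L - (e - x0)))"
    unfolding Q_def mD_def mA_def c1_def \<mu>_def t1 s by (simp add: power2_eq_square field_simps)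
  have "0 < Q"
  proof -
    have "((mid - x0) - (e - x0)) * (L - (e - x0)) < (2 * (mid - x0) - (e - x0) - L) * (3 * L - (mid - x0))"
      using e mid sg unfolding s t1 by (intro bracket_pos) (auto simp: field_simps)
    thus ?thesis unfolding Qeq using \<rho> mid by (intro mult_pos_pos) auto
  qed
  have "b * (mA + b) * (ZD + ZE) \<ge> b * (mA + b) * Q"
    using z4 z5 unfolding Q_def ZD_eq by (simp add: algebra_simps)
  moreover have "0 < b * (mA + b) * Q" using b mApos \<open>0 < Q\<close> by simp
  moreover have "b * (mA + b) * (ZD + ZE) \<le> 0" using \<open>ZD + ZE \<le> 0\<close> b mApos by (simp add: mult_nonneg_nonpos)
  ultimately show False by linarith
qed


lemma abs_less_sq: "\<bar>x::real\<bar> < \<bar>y\<bar> \<longleftrightarrow> x\<^sup>2 < y\<^sup>2"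
  using abs_le_square_iff[of y x] by linarith

definition Lj :: "nat \<Rightarrow> real" where "Lj j = 1 / 3 ^ j"

lemma Lj_pos: "0 < Lj j" by (simp add: Lj_def)

lemma geo:
  assumes "1 \<le> j"
  shows "J1 j = J0 j + Lj j" "J0 (Suc j) = J0 j + 2 * Lj j" "1 = J0 j + 3 * Lj j"
    "J1 (Suc j) = J0 j + 7/3 * Lj j" "(3/2) ^ j * Lj j = (1/2) ^ j"
proof -
  show "J1 j = J0 j + Lj j" using assms by (simp add: J0_alt J1_def Lj_def field_simps)
  show "J0 (Suc j) = J0 j + 2 * Lj j" using assms by (simp add: J0_alt J0_Suc Lj_def field_simps)
  show "1 = J0 j + 3 * Lj j" using assms by (simp add: J0_alt Lj_def field_simps)
  show "J1 (Suc j) = J0 j + 7/3 * Lj j" using assms by (simp add: J0_alt J1_def Lj_def field_simps)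
  show "(3/2) ^ j * Lj j = (1/2) ^ j" by (simp add: Lj_def power_divide field_simps)
qed

lemma Supp_01: "y \<in> Supp \<Longrightarrow> 0 \<le> y \<and> y < 1"
  using Supp_sub by auto

lemma J1_mono: "m \<le> m' \<Longrightarrow> J1 m \<le> J1 m'"
proof -
  assume "m \<le> m'"
  hence "(3::real) ^ m \<le> 3 ^ m'" by (intro power_increasing) auto
  thus ?thesis unfolding J1_def by (intro diff_left_mono divide_left_mono) auto
qed

lemma Supp_gap: "1 \<le> j \<Longrightarrow> y \<in> Supp \<Longrightarrow> \<not> (J1 j < y \<and> y < J0 (Suc j))"
proof
  assume j: "1 \<le> j" and y: "y \<in> Supp" and g: "J1 j < y \<and> y < J0 (Suc j)"
  then obtain m where m: "1 \<le> m" "y \<in> J m" by (auto simp: Supp_def)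
  show False
  proof (cases "m \<le> j")
    case True
    hence "J1 m \<le> J1 j" by (rule J1_mono)
    thus False using m g by (auto simp: J_def)
  next
    case False
    hence "J0 (Suc j) \<le> J0 m" by (intro J0_mono) simp
    thus False using m g by (auto simp: J_def)
  qed
qed

lemma in_01:
  assumes opt: "optimal_n_means n \<alpha>" and a: "a \<in> \<alpha>"
  shows "0 \<le> a \<and> a \<le> 1"
proof -
  have fa: "finite \<alpha>" using opt unfolding optimal_n_means_def by auto
  obtain l r where lr: "left_ok \<alpha> a l" "right_ok \<alpha> a r" using left_ok_ex[OF fa a] right_ok_ex[OF fa a] by blast
  have cc: "M1 {l..r} = a * M0 {l..r}" "0 < M0 {l..r}"
    by (rule CC_int[OF opt a]; use region_in[OF lr] region_out[OF lr] Supp_01 in force)+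
  have "0 * M0 {l..r} \<le> M1 {l..r}" "M1 {l..r} \<le> 1 * M0 {l..r}"
    by (rule M1_bounds; use Supp_01 in force)+
  thus ?thesis using cc by (auto simp: mult_le_cancel_right zero_le_mult_iff)
qed


lemma M1_bounds_exc:
  assumes [measurable]: "E \<in> sets borel" and h: "\<And>y. y \<in> Supp \<Longrightarrow> y \<noteq> z \<Longrightarrow> y \<in> E \<Longrightarrow> u \<le> y \<and> y \<le> v"
  shows "u * M0 E \<le> M1 E" "M1 E \<le> v * M0 E"
proof -
  have eq: "M0 E = M0 (E - {z})" "M1 E = M1 (E - {z})"
    using M_cong[of E "E - {z}" z] by auto
  have "u * M0 (E - {z}) \<le> M1 (E - {z})" "M1 (E - {z}) \<le> v * M0 (E - {z})"
    by (rule M1_bounds; use h in auto)+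
  thus "u * M0 E \<le> M1 E" "M1 E \<le> v * M0 E" using eq by auto
qed

context
  fixes n j :: nat and \<alpha> :: "real set"
  assumes opt: "optimal_n_means n \<alpha>" and j1: "1 \<le> j"
    and S1: "\<And>x a. x \<in> Supp \<Longrightarrow> J0 j < x \<Longrightarrow> a \<in> \<alpha> \<Longrightarrow> a < J0 j \<or> 1 < a \<Longrightarrow>
               \<exists>b\<in>\<alpha>. J0 j \<le> b \<and> b \<le> 1 \<and> \<bar>x - b\<bar> < \<bar>x - a\<bar>"
    and S2: "\<And>x a. x \<in> Supp \<Longrightarrow> x < J0 j \<Longrightarrow> a \<in> \<alpha> \<Longrightarrow> J0 j \<le> a \<Longrightarrow>
               \<exists>b\<in>\<alpha>. b < J0 j \<and> \<bar>x - b\<bar> < \<bar>x - a\<bar>"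
    and two: "2 \<le> card (\<alpha> \<inter> {J0 j..1})"
begin

lemma fin: "finite \<alpha>" using opt unfolding optimal_n_means_def by auto

lemma reg_CC:
  assumes a: "a \<in> \<alpha>" and lr: "left_ok \<alpha> a l" "right_ok \<alpha> a r"
  shows "M1 {l..r} = a * M0 {l..r}" "0 < M0 {l..r}"
  by (rule CC_int[OF opt a]; use region_in[OF lr] region_out[OF lr] Supp_01 in force)+

lemma not_near_below:
  assumes "y \<in> Supp" "y < J0 j" "a \<in> \<alpha>" "J0 j \<le> a" "\<forall>c\<in>\<alpha>. (y - a)\<^sup>2 \<le> (y - c)\<^sup>2"
  shows False
proof -
  obtain b where "b \<in> \<alpha>" "\<bar>y - b\<bar> < \<bar>y - a\<bar>" using S2[OF assms(1-4)] by blast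
  thus False using assms(5) by (auto simp: abs_less_sq)
qed

lemma reg_ge:
  assumes a: "a \<in> \<alpha>" "J0 j \<le> a" and lr: "left_ok \<alpha> a l" "right_ok \<alpha> a r"
    and y: "y \<in> Supp" "l \<le> y" "y \<le> r"
  shows "J0 j \<le> y"
proof (rule ccontr)
  assume "\<not> J0 j \<le> y"
  thus False using not_near_below[OF y(1) _ a] region_in[OF lr y(2,3)] by auto
qed

lemma lo_le:
  assumes a: "a \<in> \<alpha>" "J0 j \<le> a" and amin: "\<forall>c\<in>\<alpha>. J0 j \<le> c \<longrightarrow> a \<le> c" and l: "left_ok \<alpha> a l"
  shows "l \<le> J0 j"
proof (rule ccontr)
  assume "\<not> l \<le> J0 j"
  hence lg: "J0 j < l" by simp
  define y where "y = (J0 j + min l (J0 j + Lj j)) / 2"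
  have y1: "J0 j < y" "y < l" "y \<le> J0 j + Lj j" unfolding y_def using lg Lj_pos[of j] by auto
  have "y \<in> J j" unfolding J_def using y1 geo(1)[OF j1] by auto
  hence yS: "y \<in> Supp" unfolding Supp_def using j1 by auto
  have "0 \<le> y" using yS Supp_01 by auto
  then obtain c where c: "c \<in> \<alpha>" "c < a" "(y - c)\<^sup>2 < (y - a)\<^sup>2"
    using l y1 unfolding left_ok_def by blast
  have "c < J0 j" using amin c by force
  then obtain b where b: "b \<in> \<alpha>" "J0 j \<le> b" "\<bar>y - b\<bar> < \<bar>y - c\<bar>"
    using S1[OF yS y1(1) c(1)] by blast
  have "a \<le> b" using amin b by auto
  have "y \<le> a" using y1 l unfolding left_ok_def by auto
  hence "(y - a)\<^sup>2 \<le> (y - b)\<^sup>2" using \<open>a \<le> b\<close> unfolding sq_le_iff by (intro mult_nonneg_nonpos) auto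
  thus False using b(3) c(3) by (auto simp: abs_less_sq)
qed

lemma supp_split: "y \<in> Supp \<Longrightarrow> J0 j \<le> y \<Longrightarrow> y \<le> J0 j + Lj j \<or> J0 j + 2 * Lj j \<le> y"
  using Supp_gap[OF j1, of y] geo[OF j1] by force

lemma wpos: "0 < ((1::real)/2) ^ j" by simp

lemma MA: "M0 {J0 j..J0 j + Lj j} = (1/2)^j" "M1 {J0 j..J0 j + Lj j} = (1/2)^j * (J0 j + Lj j / 2)"
proof -
  have p: "M0 {J0 j..J0 j + Lj j} = (3/2)^j * (J0 j + Lj j - J0 j)"
          "M1 {J0 j..J0 j + Lj j} = (3/2) ^ j * (((J0 j + Lj j)\<^sup>2 - (J0 j)\<^sup>2) / 2)"
    using M_piece[OF j1, of "J0 j" "J0 j + Lj j"] geo[OF j1] Lj_pos[of j] by auto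
  show "M0 {J0 j..J0 j + Lj j} = (1/2)^j" using p geo(5)[OF j1] by simp
  have "(3/2::real) ^ j * (((J0 j + Lj j)\<^sup>2 - (J0 j)\<^sup>2) / 2) = (3/2) ^ j * Lj j * (J0 j + Lj j / 2)"
    by (simp add: power2_eq_square field_simps)
  thus "M1 {J0 j..J0 j + Lj j} = (1/2)^j * (J0 j + Lj j / 2)" using p geo(5)[OF j1] by simp
qed

lemma MB: "M0 {J0 j + 2 * Lj j..1} = (1/2)^j"
  using M0_tail[of "Suc j"] geo[OF j1] by simp

lemma Mpiece_A:
  assumes "J0 j \<le> u" "u \<le> v" "v \<le> J0 j + Lj j"
  shows "M0 {u..v} = (3/2)^j * (v - u)" "M1 {u..v} = (3/2)^j * ((v\<^sup>2 - u\<^sup>2) / 2)"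
  using M_piece[OF j1, of u v] assms geo(1)[OF j1] by auto

lemma other_point:
  assumes "s \<in> \<alpha>"
  shows "\<exists>c\<in>\<alpha>. J0 j \<le> c \<and> c \<le> 1 \<and> c \<noteq> s"
proof (rule ccontr)
  assume "\<not> ?thesis"
  hence "\<alpha> \<inter> {J0 j..1} \<subseteq> {s}" by auto
  hence "card (\<alpha> \<inter> {J0 j..1}) \<le> card {s}" by (intro card_mono) auto
  thus False using two by simp
qed

lemma card_swap1:
  assumes "s \<in> \<alpha>" "q \<in> \<alpha>" "q \<noteq> s"
  shows "card ((\<alpha> - {s}) \<union> {c1, q}) \<le> n"
proof -
  have "(\<alpha> - {s}) \<union> {c1, q} = insert c1 (\<alpha> - {s})" using assms by auto
  moreover have "card (insert c1 (\<alpha> - {s})) \<le> Suc (card (\<alpha> - {s}))"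
    using fin by (simp add: card_insert_if)
  moreover have "Suc (card (\<alpha> - {s})) = card \<alpha>" using card_Suc_Diff1[OF fin assms(1)] .
  moreover have "card \<alpha> \<le> n" using opt unfolding optimal_n_means_def by auto
  ultimately show ?thesis by simp
qed

lemma card_swap2:
  assumes "p \<in> \<alpha>" "s \<in> \<alpha>" "p \<noteq> s"
  shows "card ((\<alpha> - {p, s}) \<union> {c1, c2}) \<le> n"
proof -
  have "card ((\<alpha> - {p, s}) \<union> {c1, c2}) \<le> card (\<alpha> - {p, s}) + card {c1, c2}" by (rule card_Un_le)
  also have "\<dots> \<le> card (\<alpha> - {p, s}) + 2" by (simp add: card_insert_if)
  also have "card (\<alpha> - {p, s}) + 2 = card \<alpha>"
  proof -
    have "card (\<alpha> - {p, s}) = card \<alpha> - card {p, s}" using assms fin by (intro card_Diff_subset) auto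
    moreover have "card {p, s} = 2" using assms by simp
    moreover have "card {p, s} \<le> card \<alpha>" using assms fin by (intro card_mono) auto
    ultimately show ?thesis by simp
  qed
  also have "card \<alpha> \<le> n" using opt unfolding optimal_n_means_def by auto
  finally show ?thesis .
qed

lemma dm_region:
  assumes a: "a \<in> \<alpha>" and lr: "left_ok \<alpha> a l" "right_ok \<alpha> a r" and y: "l \<le> y" "y \<le> r"
  shows "dm \<alpha> y = (y - a)\<^sup>2"
  using dm_eq_near[OF fin a] region_in[OF lr y] by auto

lemma out_region:
  assumes a: "a \<in> \<alpha>" and lr: "left_ok \<alpha> a l" "right_ok \<alpha> a r" and y: "y \<in> Supp" "\<not> (l \<le> y \<and> y \<le> r)"
  shows "\<exists>c\<in>\<alpha> - {a}. (y - c)\<^sup>2 \<le> dm \<alpha> y"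
proof -
  obtain c where c: "c \<in> \<alpha> - {a}" "(y - c)\<^sup>2 \<le> (y - a)\<^sup>2"
    using region_out[OF lr _ _ y(2)] Supp_01[OF y(1)] by force
  show ?thesis using outc[OF fin _ c(1)] c(2) a by auto
qed

lemma I2_branch:
  assumes s: "s \<in> \<alpha>" "J0 j + Lj j < s" "s < J0 j + 2 * Lj j"
    and smin: "\<forall>c\<in>\<alpha>. J0 j \<le> c \<longrightarrow> s \<le> c"
  shows False
proof -
  let ?o = "J0 j" and ?L = "Lj j" and ?w = "((1::real)/2)^j"
  have L: "0 < ?L" by (rule Lj_pos)
  have g3: "1 = ?o + 3 * ?L" using geo[OF j1] by simp
  obtain l where l: "left_ok \<alpha> s l" using left_ok_ex[OF fin s(1)] by blast
  have sT: "J0 j \<le> s" using s L by simp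
  have lx: "l \<le> ?o" by (rule lo_le[OF s(1) sT smin l])
  obtain c where c: "c \<in> \<alpha>" "?o \<le> c" "c \<le> 1" "c \<noteq> s" using other_point[OF s(1)] by blast
  have sc: "s < c" using smin c by force
  obtain q where q: "q \<in> \<alpha>" "s < q" "\<forall>c\<in>\<alpha>. s < c \<longrightarrow> q \<le> c"
    using succ_cases[OF fin s(1)] c sc by force
  have q1: "q \<le> 1" using q c sc by force
  define r where "r = (s + q) / 2"
  have rs: "right_ok \<alpha> s r" unfolding r_def using q s(1) by (intro right_ok_succ) auto
  have lq: "left_ok \<alpha> q r" unfolding r_def
  proof (rule left_ok_pred[OF s(1) q(2)])
    show "\<forall>c\<in>\<alpha>. c < q \<longrightarrow> c \<le> s" using q by force
  qed
  obtain r2 where rq: "right_ok \<alpha> q r2" using right_ok_ex[OF fin q(1)] by blast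
  have ccq: "M1 {r..r2} = q * M0 {r..r2}" "0 < M0 {r..r2}" using reg_CC[OF q(1) lq rq] by auto
  have sr: "s < r" unfolding r_def using q by simp
  have "(?o + 2 * ?L) * M0 {r..r2} \<le> M1 {r..r2}"
  proof (rule M1_bounds(1)[where v = 1])
    fix y assume "y \<in> Supp" "y \<in> {r..r2}"
    thus "?o + 2 * ?L \<le> y \<and> y \<le> 1" using supp_split[of y] sr s Supp_01 by force
  qed simp
  hence qB: "?o + 2 * ?L \<le> q" using ccq by (simp add: mult_le_cancel_right)
  have ccs: "M1 {l..r} = s * M0 {l..r}" using reg_CC[OF s(1) l rs] by auto
  define A where "A = {?o..?o + ?L}"
  define EB where "EB = {?o + 2 * ?L..r}"
  have eqv: "y \<in> {l..r} \<longleftrightarrow> y \<in> A \<union> EB" if y: "y \<in> Supp" "y \<noteq> 0" for y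
  proof
    assume "y \<in> {l..r}"
    hence "?o \<le> y" using reg_ge[OF s(1) sT l rs y(1)] by auto
    thus "y \<in> A \<union> EB" using supp_split[OF y(1)] \<open>y \<in> {l..r}\<close> unfolding A_def EB_def by auto
  next
    assume "y \<in> A \<union> EB"
    thus "y \<in> {l..r}" using lx s sr L unfolding A_def EB_def by auto
  qed
  have disj: "A \<inter> EB = {}" unfolding A_def EB_def using L by auto
  have MR: "M0 {l..r} = M0 A + M0 EB" "M1 {l..r} = M1 A + M1 EB" "M2 {l..r} = M2 A + M2 EB"
    using M_cong[of "{l..r}" "A \<union> EB" 0] eqv M_add[of A EB] disj unfolding A_def EB_def by auto
  have MA': "M0 A = ?w" "M1 A = ?w * (?o + ?L / 2)" unfolding A_def using MA by auto
  have EBb: "(?o + 2 * ?L) * M0 EB \<le> M1 EB" "M1 EB \<le> (?o + 3 * ?L) * M0 EB"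
    by (rule M1_bounds; use Supp_01 g3 in \<open>force simp: EB_def\<close>)+
  have bw: "M0 EB \<le> ?w"
  proof -
    have "M0 EB \<le> M0 {?o + 2 * ?L..1}"
      by (rule M0_mono) (use Supp_01 in \<open>force simp: EB_def\<close>)+
    thus ?thesis using MB by simp
  qed
  have bpos: "0 < M0 EB"
  proof (rule ccontr)
    assume "\<not> 0 < M0 EB"
    hence b0: "M0 EB = 0" using M0_nonneg[of EB] by simp
    hence "M1 EB = 0" using EBb by simp
    hence "s * ?w = ?w * (?o + ?L / 2)" using ccs MR MA' b0 by simp
    hence "s = ?o + ?L / 2" by simp
    thus False using s L by simp
  qed
  have out: "AE y in P. y \<notin> {l..r} \<longrightarrow> (\<exists>c\<in>\<alpha> - {s}. (y - c)\<^sup>2 \<le> dm \<alpha> y)"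
    using AE_Supp by eventually_elim (use out_region[OF s(1) l rs] in auto)
  have cl: "(\<integral>y. indicator {l..r} y * dm \<alpha> y \<partial>P) \<le> (\<integral>y. indicator {l..r} y * dm {?o + ?L/2, q} y \<partial>P)"
    by (rule CL[OF opt _ _ _ card_swap1[OF s(1) q(1)] _ out]) (use q s(1) in auto)
  have lhs: "(\<integral>y. indicator {l..r} y * dm \<alpha> y \<partial>P) = (\<integral>y. indicator {l..r} y * (y - s)\<^sup>2 \<partial>P)"
    by (rule Bochner_Integration.integral_cong) (auto simp: dm_region[OF s(1) l rs] split: split_indicator)
  have iV: "integrable P (\<lambda>y. indicator {l..r} y * dm {?o + ?L/2, q} y)"
    by (rule int_ind[OF _ dm_int]) auto
  have iA: "integrable P (\<lambda>y. indicator A y * (y - (?o + ?L/2))\<^sup>2)"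
    by (rule int_ind_cont) (auto simp: A_def intro!: continuous_intros)
  have iB: "integrable P (\<lambda>y. indicator EB y * (y - q)\<^sup>2)"
    by (rule int_ind_cont) (auto simp: EB_def intro!: continuous_intros)
  have rhs: "(\<integral>y. indicator {l..r} y * dm {?o + ?L/2, q} y \<partial>P) \<le>
      (\<integral>y. indicator A y * (y - (?o + ?L/2))\<^sup>2 + indicator EB y * (y - q)\<^sup>2 \<partial>P)"
  proof (rule integral_mono_AE[OF iV Bochner_Integration.integrable_add[OF iA iB]])
    show "AE y in P. indicator {l..r} y * dm {?o + ?L/2, q} y \<le> indicator A y * (y - (?o + ?L/2))\<^sup>2 + indicator EB y * (y - q)\<^sup>2"
      using AE_Supp AE_neq[of 0]
    proof eventually_elim
      case (elim y)
      show ?case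
      proof (cases "y \<in> {l..r}")
        case True
        hence "y \<in> A \<union> EB" using eqv elim by auto
        thus ?thesis using True disj dm_le[of "{?o + ?L/2, q}" "?o + ?L/2" y] dm_le[of "{?o + ?L/2, q}" q y]
          by (auto split: split_indicator)
      qed (auto split: split_indicator)
    qed
  qed
  have rhs2: "(\<integral>y. indicator A y * (y - (?o + ?L/2))\<^sup>2 + indicator EB y * (y - q)\<^sup>2 \<partial>P)
      = (M2 A - 2 * (?o + ?L/2) * M1 A + (?o + ?L/2)\<^sup>2 * M0 A) + (M2 EB - 2 * q * M1 EB + q\<^sup>2 * M0 EB)"
    using iA iB sq_expand'[of A] sq_expand'[of EB] by (simp add: A_def EB_def)
  have "M2 {l..r} - 2 * s * M1 {l..r} + s\<^sup>2 * M0 {l..r} \<le>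
      (M2 A - 2 * (?o + ?L/2) * M1 A + (?o + ?L/2)\<^sup>2 * M0 A) + (M2 EB - 2 * q * M1 EB + q\<^sup>2 * M0 EB)"
    using cl lhs rhs rhs2 sq_expand'[of "{l..r}" s] by simp
  hence hyp: "(M2 A + M2 EB) - 2 * s * (?w * (?o + ?L/2) + M1 EB) + s\<^sup>2 * (?w + M0 EB)
      \<le> (M2 A - 2 * (?o + ?L/2) * (?w * (?o + ?L/2)) + (?o + ?L/2)\<^sup>2 * ?w) + (M2 EB - 2 * q * M1 EB + q\<^sup>2 * M0 EB)"
    unfolding MR MA' by simp
  have sEq: "s * (?w + M0 EB) = ?w * (?o + ?L/2) + M1 EB" using ccs unfolding MR MA' by simp
  show False
    by (rule I2_alg[OF wpos L bpos bw EBb qB _ sEq hyp]) (use q1 g3 in simp)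
qed

lemma M0_degenerate: "v \<le> u \<Longrightarrow> M0 {u..v} = 0"
proof -
  assume "v \<le> u"
  hence "M0 {u..v} \<le> M0 {u}" by (intro M0_mono) auto
  moreover have "M0 {u} = 0" using P_single[of u] by (simp add: M0_measure Pprob.emeasure_eq_measure)
  ultimately show ?thesis using M0_nonneg[of "{u..v}"] by simp
qed

lemma I1_branch:
  assumes p: "p \<in> \<alpha>" "J0 j \<le> p" "p < s" and ppred: "\<forall>c\<in>\<alpha>. c < s \<longrightarrow> c \<le> p"
    and s: "s \<in> \<alpha>" "J0 j + Lj j < s" "s < J0 j + 2 * Lj j"
    and smin: "\<forall>c\<in>\<alpha>. J0 j + Lj j < c \<longrightarrow> c < J0 j + 2 * Lj j \<longrightarrow> s \<le> c"
  shows False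
proof -
  let ?o = "J0 j" and ?L = "Lj j" and ?r = "((3::real)/2)^j"
  have L: "0 < ?L" by (rule Lj_pos)
  have rho: "0 < ?r" by simp
  have g3: "1 = ?o + 3 * ?L" using geo[OF j1] by simp
  have pA: "p \<le> ?o + ?L"
  proof (rule ccontr)
    assume "\<not> p \<le> ?o + ?L"
    hence "s \<le> p" using smin p s by force
    thus False using p by simp
  qed
  define mid where "mid = (p + s) / 2"
  have ls: "left_ok \<alpha> s mid" unfolding mid_def by (rule left_ok_pred[OF p(1) p(3) ppred])
  have rp: "right_ok \<alpha> p mid" unfolding mid_def
  proof (rule right_ok_succ[OF s(1) p(3)])
    show "\<forall>c\<in>\<alpha>. p < c \<longrightarrow> s \<le> c" using ppred by force
  qed
  obtain l1 where lp: "left_ok \<alpha> p l1" using left_ok_ex[OF fin p(1)] by blast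
  obtain r where rs: "right_ok \<alpha> s r" using right_ok_ex[OF fin s(1)] by blast
  have ccp: "M1 {l1..mid} = p * M0 {l1..mid}" "0 < M0 {l1..mid}" using reg_CC[OF p(1) lp rp] by auto
  have ccs: "M1 {mid..r} = s * M0 {mid..r}" "0 < M0 {mid..r}" using reg_CC[OF s(1) ls rs] by auto
  have sr: "s \<le> r" using rs unfolding right_ok_def by simp
  have pm: "p < mid" "mid < s" unfolding mid_def using p by auto
  have mid_lt: "mid < ?o + ?L"
  proof (rule ccontr)
    assume "\<not> mid < ?o + ?L"
    hence "(?o + 2 * ?L) * M0 {mid..r} \<le> M1 {mid..r}"
      by (intro M1_bounds_exc(1)[where z = "?o + ?L" and v = 1])
        (use supp_split Supp_01 p pm in force)+
    hence "?o + 2 * ?L \<le> s" using ccs by (simp add: mult_le_cancel_right)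
    thus False using s by simp
  qed
  define e where "e = max l1 ?o"
  have eqvD: "y \<in> {l1..mid} \<longleftrightarrow> y \<in> {e..mid}" if y: "y \<in> Supp" "y \<noteq> 0" for y
  proof
    assume "y \<in> {l1..mid}"
    thus "y \<in> {e..mid}" using reg_ge[OF p(1,2) lp rp y(1)] unfolding e_def by auto
  qed (auto simp: e_def)
  have MD: "M0 {l1..mid} = M0 {e..mid}" "M1 {l1..mid} = M1 {e..mid}" "M2 {l1..mid} = M2 {e..mid}"
    using M_cong[of "{l1..mid}" "{e..mid}" 0] eqvD by auto
  have e0: "?o \<le> e" unfolding e_def by simp
  have em: "e < mid"
  proof (rule ccontr)
    assume "\<not> e < mid"
    hence "M0 {e..mid} = 0" by (intro M0_degenerate) simp
    thus False using ccp MD by simp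
  qed
  have mDf: "M0 {e..mid} = ?r * (mid - e)" "M1 {e..mid} = ?r * ((mid\<^sup>2 - e\<^sup>2) / 2)"
    using Mpiece_A[of e mid] e0 em mid_lt by auto
  have p_eq: "p = (e + mid) / 2"
  proof -
    have "?r * ((mid\<^sup>2 - e\<^sup>2) / 2) = p * (?r * (mid - e))" using ccp MD mDf by simp
    hence "?r * (mid - e) * ((e + mid) / 2) = ?r * (mid - e) * p"
      by (simp add: power2_eq_square field_simps)
    thus ?thesis using rho em by simp
  qed
  have s_eq: "s = 2 * mid - p" unfolding mid_def by (simp add: field_simps)
  define EA where "EA = {mid..?o + ?L}"
  define EB where "EB = {?o + 2 * ?L..r}"
  have eqvS: "y \<in> {mid..r} \<longleftrightarrow> y \<in> EA \<union> EB" if y: "y \<in> Supp" "y \<noteq> 0" for y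
  proof
    assume "y \<in> {mid..r}"
    thus "y \<in> EA \<union> EB" using supp_split[OF y(1)] p pm unfolding EA_def EB_def by force
  next
    assume "y \<in> EA \<union> EB"
    thus "y \<in> {mid..r}" using s sr pm unfolding EA_def EB_def by auto
  qed
  have disj: "EA \<inter> EB = {}" unfolding EA_def EB_def using L by auto
  have MS0: "M0 {mid..r} = M0 (EA \<union> EB)" "M1 {mid..r} = M1 (EA \<union> EB)" "M2 {mid..r} = M2 (EA \<union> EB)"
    by (rule M_cong[where z = 0]; use eqvS in \<open>auto simp: EA_def EB_def\<close>)+
  have MS1: "M0 (EA \<union> EB) = M0 EA + M0 EB" "M1 (EA \<union> EB) = M1 EA + M1 EB" "M2 (EA \<union> EB) = M2 EA + M2 EB"
    by (rule M_add[OF _ _ disj]; simp add: EA_def EB_def)+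
  have MS: "M0 {mid..r} = M0 EA + M0 EB" "M1 {mid..r} = M1 EA + M1 EB" "M2 {mid..r} = M2 EA + M2 EB"
    using MS0 MS1 by auto
  have mAf: "M0 EA = ?r * (?o + ?L - mid)" "M1 EA = ?r * (((?o + ?L)\<^sup>2 - mid\<^sup>2) / 2)"
    unfolding EA_def using Mpiece_A[of mid "?o + ?L"] e0 em mid_lt by auto
  have EBb: "(?o + 2 * ?L) * M0 EB \<le> M1 EB" "M1 EB \<le> 1 * M0 EB"
    by (rule M1_bounds; use Supp_01 g3 in \<open>force simp: EB_def\<close>)+
  have bpos: "0 < M0 EB"
  proof (rule ccontr)
    assume "\<not> 0 < M0 EB"
    hence b0: "M0 EB = 0" using M0_nonneg[of EB] by simp
    hence "M1 EB = 0" using EBb by (simp add: order_antisym)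
    hence "s * (?r * (?o + ?L - mid)) = ?r * (((?o + ?L)\<^sup>2 - mid\<^sup>2) / 2)"
      using ccs MS mAf b0 by simp
    hence "?r * (?o + ?L - mid) * s = ?r * (?o + ?L - mid) * ((?o + ?L + mid) / 2)"
      by (simp add: power2_eq_square field_simps)
    hence "s = (?o + ?L + mid) / 2" using rho mid_lt by simp
    thus False using s mid_lt by simp
  qed
  define c1 where "c1 = (e + ?o + ?L) / 2"
  define c2 where "c2 = M1 EB / M0 EB"
  define \<theta> where "\<theta> = ?o + 3 / 2 * ?L"
  have pns: "p \<noteq> s" using p by simp
  have out: "AE y in P. y \<notin> {l1..r} \<longrightarrow> (\<exists>c\<in>\<alpha> - {p, s}. (y - c)\<^sup>2 \<le> dm \<alpha> y)"
    using AE_Supp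
  proof eventually_elim
    case (elim y)
    show ?case
    proof
      assume yR: "y \<notin> {l1..r}"
      have y01: "0 \<le> y" "y \<le> 1" using Supp_01[OF elim] by auto
      show "\<exists>c\<in>\<alpha> - {p, s}. (y - c)\<^sup>2 \<le> dm \<alpha> y"
      proof (cases "y < l1")
        case True
        then obtain c where c: "c \<in> \<alpha>" "c < p" "(y - c)\<^sup>2 < (y - p)\<^sup>2" using lp y01 unfolding left_ok_def by blast
        have "l1 \<le> p" using lp unfolding left_ok_def by simp
        hence "(y - p)\<^sup>2 \<le> (y - s)\<^sup>2" using True p by (intro closer_right) auto
        thus ?thesis using outc[OF fin, of "{p, s}" c y] c p s by auto
      next
        case False
        hence yr: "r < y" using yR by auto
        then obtain c where c: "c \<in> \<alpha>" "s < c" "(y - c)\<^sup>2 < (y - s)\<^sup>2" using rs y01 unfolding right_ok_def by blast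
        have "(y - s)\<^sup>2 \<le> (y - p)\<^sup>2" using yr sr p by (intro closer_left) auto
        thus ?thesis using outc[OF fin, of "{p, s}" c y] c p s by auto
      qed
    qed
  qed
  have cl: "(\<integral>y. indicator {l1..r} y * dm \<alpha> y \<partial>P) \<le> (\<integral>y. indicator {l1..r} y * dm {c1, c2} y \<partial>P)"
    by (rule CL[OF opt _ _ _ card_swap2[OF p(1) s(1) pns] _ out]) (use p s in auto)
  have i1: "integrable P (\<lambda>y. indicator {l1..mid} y * (y - p)\<^sup>2)"
    by (rule int_ind_cont) (auto intro!: continuous_intros)
  have i2: "integrable P (\<lambda>y. indicator {mid<..r} y * (y - s)\<^sup>2)"
    by (rule int_ind_cont) (auto intro!: continuous_intros)
  have lhs: "(\<integral>y. indicator {l1..r} y * dm \<alpha> y \<partial>P) = (\<integral>y. indicator {l1..mid} y * (y - p)\<^sup>2 + indicator {mid<..r} y * (y - s)\<^sup>2 \<partial>P)"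
  proof (rule Bochner_Integration.integral_cong)
    fix y
    show "indicator {l1..r} y * dm \<alpha> y = indicator {l1..mid} y * (y - p)\<^sup>2 + indicator {mid<..r} y * (y - s)\<^sup>2"
    proof (cases "y \<le> mid")
      case True
      thus ?thesis using dm_region[OF p(1) lp rp, of y] pm sr by (auto split: split_indicator)
    next
      case False
      have "l1 \<le> mid" using lp pm unfolding left_ok_def by simp
      thus ?thesis using False dm_region[OF s(1) ls rs, of y] by (auto split: split_indicator)
    qed
  qed simp
  have lhs2: "(\<integral>y. indicator {l1..mid} y * (y - p)\<^sup>2 + indicator {mid<..r} y * (y - s)\<^sup>2 \<partial>P)
      = (M2 {e..mid} - 2 * p * M1 {e..mid} + p\<^sup>2 * M0 {e..mid}) + (M2 {mid..r} - 2 * s * M1 {mid..r} + s\<^sup>2 * M0 {mid..r})"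
  proof -
    have "(\<integral>y. indicator {mid<..r} y * (y - s)\<^sup>2 \<partial>P) = (\<integral>y. indicator {mid..r} y * (y - s)\<^sup>2 \<partial>P)"
      by (rule ind_cong[where z = mid]) auto
    thus ?thesis using i1 i2 sq_expand'[of "{l1..mid}" p] sq_expand'[of "{mid..r}" s] MD by simp
  qed
  have iV: "integrable P (\<lambda>y. indicator {l1..r} y * dm {c1, c2} y)"
    by (rule int_ind[OF _ dm_int]) auto
  have i3: "integrable P (\<lambda>y. indicator {l1..\<theta>} y * (y - c1)\<^sup>2)"
    by (rule int_ind_cont) (auto intro!: continuous_intros)
  have i4: "integrable P (\<lambda>y. indicator {\<theta><..r} y * (y - c2)\<^sup>2)"
    by (rule int_ind_cont) (auto intro!: continuous_intros)
  have rhs: "(\<integral>y. indicator {l1..r} y * dm {c1, c2} y \<partial>P) \<le>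
      (\<integral>y. indicator {l1..\<theta>} y * (y - c1)\<^sup>2 + indicator {\<theta><..r} y * (y - c2)\<^sup>2 \<partial>P)"
  proof (rule integral_mono[OF iV Bochner_Integration.integrable_add[OF i3 i4]])
    fix y
    show "indicator {l1..r} y * dm {c1, c2} y \<le> indicator {l1..\<theta>} y * (y - c1)\<^sup>2 + indicator {\<theta><..r} y * (y - c2)\<^sup>2"
      using dm_le[of "{c1, c2}" c1 y] dm_le[of "{c1, c2}" c2 y]
      by (cases "y \<le> \<theta>") (auto split: split_indicator)
  qed
  have eqv1: "y \<in> {l1..\<theta>} \<longleftrightarrow> y \<in> {e..?o + ?L}" if y: "y \<in> Supp" "y \<noteq> 0" for y
  proof
    assume yin: "y \<in> {l1..\<theta>}"
    have "?o \<le> y"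
    proof (cases "y \<le> mid")
      case True thus ?thesis using reg_ge[OF p(1,2) lp rp y(1)] yin by auto
    next
      case False thus ?thesis using p pm by auto
    qed
    thus "y \<in> {e..?o + ?L}" using supp_split[OF y(1)] yin L unfolding e_def \<theta>_def by auto
  next
    assume "y \<in> {e..?o + ?L}"
    thus "y \<in> {l1..\<theta>}" using L unfolding e_def \<theta>_def by auto
  qed
  have eqv2: "y \<in> {\<theta><..r} \<longleftrightarrow> y \<in> EB" if y: "y \<in> Supp" "y \<noteq> 0" for y
  proof
    assume yin: "y \<in> {\<theta><..r}"
    hence "?o \<le> y" using L unfolding \<theta>_def by auto
    thus "y \<in> EB" using supp_split[OF y(1)] yin L unfolding EB_def \<theta>_def by auto
  next
    assume "y \<in> EB"
    thus "y \<in> {\<theta><..r}" using L unfolding EB_def \<theta>_def by auto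
  qed
  have eL: "e \<le> ?o + ?L" using em mid_lt by simp
  have MeL0: "M0 {e..?o + ?L} = ?r * (?o + ?L - e)" "M1 {e..?o + ?L} = ?r * (((?o + ?L)\<^sup>2 - e\<^sup>2) / 2)"
    using Mpiece_A[of e "?o + ?L"] e0 eL by auto
  have MeL: "M0 {e..?o + ?L} = ?r * (mid - e) + ?r * (?o + ?L - mid)"
      "M1 {e..?o + ?L} = ?r * ((mid\<^sup>2 - e\<^sup>2) / 2) + ?r * (((?o + ?L)\<^sup>2 - mid\<^sup>2) / 2)"
    unfolding MeL0 by (simp_all add: field_simps)
  have M2eL: "M2 {e..?o + ?L} = M2 {e..mid} + M2 EA"
  proof -
    have "{e..?o + ?L} = {e..mid} \<union> {mid<..?o + ?L}" using em mid_lt by auto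
    moreover have "M2 ({e..mid} \<union> {mid<..?o + ?L}) = M2 {e..mid} + M2 {mid<..?o + ?L}"
      by (rule M_add) auto
    moreover have "M2 {mid<..?o + ?L} = M2 EA" unfolding EA_def by (rule M_cong(3)[where z = mid]) auto
    ultimately show ?thesis by simp
  qed
  have rhs2: "(\<integral>y. indicator {l1..\<theta>} y * (y - c1)\<^sup>2 + indicator {\<theta><..r} y * (y - c2)\<^sup>2 \<partial>P)
      = (M2 {e..?o + ?L} - 2 * c1 * M1 {e..?o + ?L} + c1\<^sup>2 * M0 {e..?o + ?L}) + (M2 EB - 2 * c2 * M1 EB + c2\<^sup>2 * M0 EB)"
  proof -
    have "M0 {l1..\<theta>} = M0 {e..?o + ?L}" "M1 {l1..\<theta>} = M1 {e..?o + ?L}" "M2 {l1..\<theta>} = M2 {e..?o + ?L}"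
      using M_cong[of "{l1..\<theta>}" "{e..?o + ?L}" 0] eqv1 by auto
    moreover have "M0 {\<theta><..r} = M0 EB" "M1 {\<theta><..r} = M1 EB" "M2 {\<theta><..r} = M2 EB"
      using M_cong[of "{\<theta><..r}" EB 0] eqv2 unfolding EB_def by auto
    ultimately show ?thesis using i3 i4 sq_expand'[of "{l1..\<theta>}" c1] sq_expand'[of "{\<theta><..r}" c2] by simp
  qed
  have main: "(M2 {e..mid} - 2 * p * M1 {e..mid} + p\<^sup>2 * M0 {e..mid}) + (M2 {mid..r} - 2 * s * M1 {mid..r} + s\<^sup>2 * M0 {mid..r})
     \<le> (M2 {e..?o + ?L} - 2 * c1 * M1 {e..?o + ?L} + c1\<^sup>2 * M0 {e..?o + ?L}) + (M2 EB - 2 * c2 * M1 EB + c2\<^sup>2 * M0 EB)"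
    using cl lhs lhs2 rhs rhs2 by simp
  have CCs: "s * (?r * (?o + ?L - mid) + M0 EB) = ?r * (((?o + ?L)\<^sup>2 - mid\<^sup>2) / 2) + M1 EB"
    using ccs MS mAf by simp
  show False
  proof (rule I1_alg[OF rho L e0 em mid_lt bpos EBb(1) p_eq s_eq s(2) CCs])
    show "(M2 {e..mid} - 2 * p * (?r * ((mid\<^sup>2 - e\<^sup>2) / 2)) + p\<^sup>2 * (?r * (mid - e))) +
      ((M2 EA + M2 EB) - 2 * s * (?r * (((?o + ?L)\<^sup>2 - mid\<^sup>2) / 2) + M1 EB) + s\<^sup>2 * (?r * (?o + ?L - mid) + M0 EB))
      \<le> ((M2 {e..mid} + M2 EA) - 2 * ((e + ?o + ?L) / 2) * (?r * ((mid\<^sup>2 - e\<^sup>2) / 2) + ?r * (((?o + ?L)\<^sup>2 - mid\<^sup>2) / 2))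
           + ((e + ?o + ?L) / 2)\<^sup>2 * (?r * (mid - e) + ?r * (?o + ?L - mid)))
        + (M2 EB - 2 * (M1 EB / M0 EB) * M1 EB + (M1 EB / M0 EB)\<^sup>2 * M0 EB)"
      using main unfolding MS mDf mAf MeL M2eL c1_def c2_def by simp
  qed
qed

lemma no_gap: "\<alpha> \<inter> {J1 j<..<J0 (Suc j)} = {}"
proof (rule ccontr)
  let ?o = "J0 j" and ?L = "Lj j"
  have g: "J1 j = ?o + ?L" "J0 (Suc j) = ?o + 2 * ?L" using geo[OF j1] by auto
  assume ne: "\<alpha> \<inter> {J1 j<..<J0 (Suc j)} \<noteq> {}"
  define G where "G = \<alpha> \<inter> {J1 j<..<J0 (Suc j)}"
  have fG: "finite G" "G \<noteq> {}" using fin ne unfolding G_def by auto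
  define s where "s = Min G"
  have sG: "s \<in> G" unfolding s_def using fG by (rule Min_in)
  hence s: "s \<in> \<alpha>" "?o + ?L < s" "s < ?o + 2 * ?L" unfolding G_def g by auto
  have smin: "\<forall>c\<in>\<alpha>. ?o + ?L < c \<longrightarrow> c < ?o + 2 * ?L \<longrightarrow> s \<le> c"
    unfolding s_def using fG by (auto simp: G_def g)
  from pred_cases[OF fin s(1)] show False
  proof
    assume "\<forall>c\<in>\<alpha>. s \<le> c"
    thus False by (intro I2_branch[OF s]) auto
  next
    assume "\<exists>p\<in>\<alpha>. p < s \<and> (\<forall>c\<in>\<alpha>. c < s \<longrightarrow> c \<le> p)"
    then obtain p where p: "p \<in> \<alpha>" "p < s" "\<forall>c\<in>\<alpha>. c < s \<longrightarrow> c \<le> p" by blast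
    show False
    proof (cases "?o \<le> p")
      case True
      thus False by (intro I1_branch[OF p(1) True p(2) p(3) s smin])
    next
      case False
      have "\<forall>c\<in>\<alpha>. ?o \<le> c \<longrightarrow> s \<le> c"
      proof (intro ballI impI)
        fix c assume "c \<in> \<alpha>" "?o \<le> c"
        thus "s \<le> c" using p False by force
      qed
      thus False by (intro I2_branch[OF s])
    qed
  qed
qed

lemma has_A: "\<exists>a\<in>\<alpha>. J0 j \<le> a \<and> a \<le> J0 j + Lj j"
proof (rule ccontr)
  let ?o = "J0 j" and ?L = "Lj j" and ?w = "((1::real)/2)^j"
  have L: "0 < ?L" by (rule Lj_pos)
  have g: "J1 j = ?o + ?L" "J0 (Suc j) = ?o + 2 * ?L" "1 = ?o + 3 * ?L" using geo[OF j1] by auto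
  assume nA: "\<not> (\<exists>a\<in>\<alpha>. ?o \<le> a \<and> a \<le> ?o + ?L)"
  define T where "T = \<alpha> \<inter> {?o..1}"
  have fT: "finite T" "T \<noteq> {}" using fin two unfolding T_def by auto
  define p1 where "p1 = Min T"
  have p1T: "p1 \<in> T" unfolding p1_def using fT by (rule Min_in)
  hence p1: "p1 \<in> \<alpha>" "?o \<le> p1" "p1 \<le> 1" unfolding T_def by auto
  have pmin: "\<forall>c\<in>\<alpha>. ?o \<le> c \<longrightarrow> p1 \<le> c"
  proof (intro ballI impI)
    fix c assume c: "c \<in> \<alpha>" "?o \<le> c"
    show "p1 \<le> c"
    proof (cases "c \<le> 1")
      case True thus ?thesis unfolding p1_def using fT c by (auto simp: T_def)
    qed (use p1 in auto)
  qed
  have p1B: "?o + 2 * ?L \<le> p1"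
  proof (rule ccontr)
    assume "\<not> ?o + 2 * ?L \<le> p1"
    moreover have "\<not> p1 \<le> ?o + ?L" using nA p1 by auto
    ultimately have "p1 \<in> \<alpha> \<inter> {J1 j<..<J0 (Suc j)}" using p1 g by auto
    thus False using no_gap by auto
  qed
  obtain l where l: "left_ok \<alpha> p1 l" using left_ok_ex[OF fin p1(1)] by blast
  obtain r where r: "right_ok \<alpha> p1 r" using right_ok_ex[OF fin p1(1)] by blast
  have lx: "l \<le> ?o" by (rule lo_le[OF p1(1,2) pmin l])
  have pr: "p1 \<le> r" using r unfolding right_ok_def by simp
  have cc: "M1 {l..r} = p1 * M0 {l..r}" using reg_CC[OF p1(1) l r] by auto
  define A where "A = {?o..?o + ?L}"
  define EB where "EB = {?o + 2 * ?L..r}"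
  have eqv: "y \<in> {l..r} \<longleftrightarrow> y \<in> A \<union> EB" if y: "y \<in> Supp" "y \<noteq> 0" for y
  proof
    assume "y \<in> {l..r}"
    hence "?o \<le> y" using reg_ge[OF p1(1,2) l r y(1)] by auto
    thus "y \<in> A \<union> EB" using supp_split[OF y(1)] \<open>y \<in> {l..r}\<close> unfolding A_def EB_def by auto
  next
    assume "y \<in> A \<union> EB"
    thus "y \<in> {l..r}" using lx p1B pr L unfolding A_def EB_def by auto
  qed
  have disj: "A \<inter> EB = {}" unfolding A_def EB_def using L by auto
  have MR0: "M0 {l..r} = M0 (A \<union> EB)" "M1 {l..r} = M1 (A \<union> EB)"
    by (rule M_cong[where z = 0]; use eqv in \<open>auto simp: A_def EB_def\<close>)+
  have MR1: "M0 (A \<union> EB) = M0 A + M0 EB" "M1 (A \<union> EB) = M1 A + M1 EB"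
    by (rule M_add[OF _ _ disj]; simp add: A_def EB_def)+
  have MA': "M0 A = ?w" "M1 A = ?w * (?o + ?L / 2)" unfolding A_def using MA by auto
  have EBb: "M1 EB \<le> (?o + 3 * ?L) * M0 EB"
    by (rule M1_bounds(2)[where u = 0]) (use Supp_01 g in \<open>force simp: EB_def\<close>)+
  have bw: "M0 EB \<le> ?w"
  proof -
    have "M0 EB \<le> M0 {?o + 2 * ?L..1}"
      by (rule M0_mono) (use Supp_01 in \<open>force simp: EB_def\<close>)+
    thus ?thesis using MB by simp
  qed
  have b0: "0 \<le> M0 EB" by (rule M0_nonneg)
  have eq: "p1 * (?w + M0 EB) = ?w * (?o + ?L / 2) + M1 EB" using cc MR0 MR1 MA' by simp
  have "(?o + 2 * ?L) * (?w + M0 EB) \<le> p1 * (?w + M0 EB)" using p1B b0 by (intro mult_right_mono) auto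
  moreover have "?L * M0 EB \<le> ?L * ?w" using bw L by (intro mult_left_mono) auto
  moreover have "0 < ?L * ?w" using L by simp
  ultimately show False using eq EBb by (simp add: algebra_simps)
qed

lemma has_B: "\<exists>b\<in>\<alpha>. J0 j + 2 * Lj j \<le> b \<and> b \<le> 1"
proof (rule ccontr)
  let ?o = "J0 j" and ?L = "Lj j" and ?w = "((1::real)/2)^j" and ?r = "((3::real)/2)^j"
  have L: "0 < ?L" by (rule Lj_pos)
  have g: "J1 j = ?o + ?L" "J0 (Suc j) = ?o + 2 * ?L" "1 = ?o + 3 * ?L" "?r * ?L = ?w" using geo[OF j1] by auto
  assume nB: "\<not> (\<exists>b\<in>\<alpha>. ?o + 2 * ?L \<le> b \<and> b \<le> 1)"
  define T where "T = \<alpha> \<inter> {?o..1}"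
  have fT: "finite T" "T \<noteq> {}" using fin two unfolding T_def by auto
  define pr where "pr = Max T"
  have prT: "pr \<in> T" unfolding pr_def using fT by (rule Max_in)
  hence pr: "pr \<in> \<alpha>" "?o \<le> pr" "pr \<le> 1" unfolding T_def by auto
  have pmax: "\<forall>c\<in>\<alpha>. ?o \<le> c \<longrightarrow> c \<le> 1 \<longrightarrow> c \<le> pr"
    unfolding pr_def using fT by (auto simp: T_def)
  have prA: "pr \<le> ?o + ?L"
  proof (rule ccontr)
    assume "\<not> pr \<le> ?o + ?L"
    moreover have "\<not> ?o + 2 * ?L \<le> pr" using nB pr by auto
    ultimately have "pr \<in> \<alpha> \<inter> {J1 j<..<J0 (Suc j)}" using pr g by auto
    thus False using no_gap by auto
  qed
  obtain l where l: "left_ok \<alpha> pr l" using left_ok_ex[OF fin pr(1)] by blast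
  have lpr: "l \<le> pr" using l unfolding left_ok_def by simp
  have hin: "\<forall>c\<in>\<alpha>. (y - pr)\<^sup>2 \<le> (y - c)\<^sup>2" if y: "y \<in> Supp" "l \<le> y" "y \<le> 1" for y
  proof
    fix c assume c: "c \<in> \<alpha>"
    show "(y - pr)\<^sup>2 \<le> (y - c)\<^sup>2"
    proof (cases "c < pr")
      case True thus ?thesis using l y c unfolding left_ok_def by auto
    next
      case False
      show ?thesis
      proof (cases "c = pr")
        case False
        hence cpr: "pr < c" using \<open>\<not> c < pr\<close> by simp
        hence c1: "1 < c" using pmax c pr by force
        show ?thesis
        proof (cases "y \<le> pr")
          case True thus ?thesis using cpr by (intro closer_right) auto
        next
          case False
          hence "?o < y" using pr by simp
          then obtain b where b: "b \<in> \<alpha>" "?o \<le> b" "b \<le> 1" "\<bar>y - b\<bar> < \<bar>y - c\<bar>"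
            using S1[OF y(1) _ c] c1 by blast
          have "b \<le> pr" using pmax b by auto
          hence "(y - pr)\<^sup>2 \<le> (y - b)\<^sup>2" using False unfolding sq_le_iff by (intro mult_nonpos_nonneg) auto
          thus ?thesis using b(4) by (auto simp: abs_less_sq)
        qed
      qed simp
    qed
  qed
  have cc: "M1 {l..1} = pr * M0 {l..1}"
  proof (rule CC_int(1)[OF opt pr(1)])
    fix y assume "y \<in> Supp" "l \<le> y" "y \<le> 1"
    thus "\<forall>c\<in>\<alpha>. (y - pr)\<^sup>2 \<le> (y - c)\<^sup>2" using hin by auto
  next
    fix y assume y: "y \<in> Supp" "\<not> (l \<le> y \<and> y \<le> 1)"
    hence "y < l" using Supp_01[OF y(1)] by auto
    then obtain c where "c \<in> \<alpha>" "c < pr" "(y - c)\<^sup>2 < (y - pr)\<^sup>2" using l Supp_01[OF y(1)] unfolding left_ok_def by blast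
    thus "\<exists>c\<in>\<alpha> - {pr}. (y - c)\<^sup>2 \<le> (y - pr)\<^sup>2" by (intro bexI[of _ c]) auto
  qed
  define e where "e = max l ?o"
  have e: "?o \<le> e" "e \<le> ?o + ?L" unfolding e_def using lpr prA L by auto
  define EB where "EB = {?o + 2 * ?L..1}"
  have eqv: "y \<in> {l..1} \<longleftrightarrow> y \<in> {e..?o + ?L} \<union> EB" if y: "y \<in> Supp" "y \<noteq> 0" for y
  proof
    assume yin: "y \<in> {l..1}"
    have "?o \<le> y"
    proof (rule ccontr)
      assume "\<not> ?o \<le> y"
      thus False using not_near_below[OF y(1) _ pr(1,2)] hin[OF y(1)] yin by auto
    qed
    thus "y \<in> {e..?o + ?L} \<union> EB" using supp_split[OF y(1)] yin unfolding e_def EB_def by auto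
  next
    assume "y \<in> {e..?o + ?L} \<union> EB"
    thus "y \<in> {l..1}" using e g L unfolding e_def EB_def by auto
  qed
  have disj: "{e..?o + ?L} \<inter> EB = {}" unfolding EB_def using L by auto
  have MR0: "M0 {l..1} = M0 ({e..?o + ?L} \<union> EB)" "M1 {l..1} = M1 ({e..?o + ?L} \<union> EB)"
    by (rule M_cong[where z = 0]; use eqv in \<open>auto simp: EB_def\<close>)+
  have MR1: "M0 ({e..?o + ?L} \<union> EB) = M0 {e..?o + ?L} + M0 EB" "M1 ({e..?o + ?L} \<union> EB) = M1 {e..?o + ?L} + M1 EB"
    by (rule M_add[OF _ _ disj]; simp add: EB_def)+
  have Me: "M0 {e..?o + ?L} = ?r * (?o + ?L - e)" "M1 {e..?o + ?L} = ?r * (((?o + ?L)\<^sup>2 - e\<^sup>2) / 2)"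
    using Mpiece_A[of e "?o + ?L"] e by auto
  have MEB: "M0 EB = ?w" unfolding EB_def using MB by simp
  have fB: "(?o + 2 * ?L) * M0 EB \<le> M1 EB"
    by (rule M1_bounds(1)[where v = 1]) (use Supp_01 in \<open>force simp: EB_def\<close>)+
  have M0pos: "0 \<le> M0 {l..1}" by (rule M0_nonneg)
  have "M1 {l..1} \<le> (?o + ?L) * M0 {l..1}" using cc prA M0pos by (simp add: mult_right_mono)
  hence ineq: "?r * (((?o + ?L)\<^sup>2 - e\<^sup>2) / 2) + M1 EB \<le> (?o + ?L) * (?r * (?o + ?L - e) + ?w)"
    using MR0 MR1 Me MEB by simp
  define d where "d = ?o + ?L - e"
  have d: "0 \<le> d" "d \<le> ?L" unfolding d_def using e by auto
  have iden: "(?o + ?L) * (?r * (?o + ?L - e)) - ?r * (((?o + ?L)\<^sup>2 - e\<^sup>2) / 2) = ?r * d\<^sup>2 / 2"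
    unfolding d_def by (simp add: power2_eq_square field_simps)
  have "d\<^sup>2 \<le> ?L\<^sup>2" using d by (intro power_mono) auto
  hence r1: "?r * d\<^sup>2 \<le> ?r * ?L\<^sup>2" by (intro mult_left_mono) auto
  have r2: "?r * ?L\<^sup>2 = ?w * ?L" using g(4) by (simp add: power2_eq_square algebra_simps)
  define X where "X = (?o + ?L) * (?r * (?o + ?L - e)) - ?r * (((?o + ?L)\<^sup>2 - e\<^sup>2) / 2)"
  have dist: "(?o + ?L) * (?r * (?o + ?L - e) + ?w) = (?o + ?L) * (?r * (?o + ?L - e)) + (?o + ?L) * ?w"
    by (simp add: distrib_left)
  have m1: "M1 EB \<le> X + (?o + ?L) * ?w" using ineq dist unfolding X_def by linarith
  have m2: "(?o + 2 * ?L) * ?w \<le> M1 EB" using fB MEB by simp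
  have m3: "(?o + 2 * ?L) * ?w = (?o + ?L) * ?w + ?L * ?w" by (simp add: algebra_simps)
  have m4: "X = ?r * d\<^sup>2 / 2" unfolding X_def using iden .
  have "?L * ?w \<le> ?r * d\<^sup>2 / 2" using m1 m2 m3 m4 by linarith
  also have "\<dots> \<le> ?w * ?L / 2" using r1 r2 by simp
  finally show False using L by (simp add: mult.commute)
qed

lemma split_main:
  "\<alpha> \<inter> {J1 j<..<J0 (Suc j)} = {} \<and>
   (\<exists>a0 b0. a0 \<in> \<alpha> \<and> a0 \<in> J j \<and> b0 \<in> \<alpha> \<and> J0 (Suc j) \<le> b0 \<and> b0 \<le> 1 \<and>
      (\<forall>c\<in>\<alpha>. c < J0 (Suc j) \<longrightarrow> c \<le> a0) \<and> (\<forall>c\<in>\<alpha>. J0 (Suc j) \<le> c \<longrightarrow> b0 \<le> c) \<and>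
      2 * J1 j < a0 + b0 \<and> a0 + b0 < 2 * J0 (Suc j))"
proof -
  let ?o = "J0 j" and ?L = "Lj j" and ?w = "((1::real)/2)^j" and ?r = "((3::real)/2)^j"
  have L: "0 < ?L" by (rule Lj_pos)
  have g: "J1 j = ?o + ?L" "J0 (Suc j) = ?o + 2 * ?L" "1 = ?o + 3 * ?L" "?r * ?L = ?w" using geo[OF j1] by auto
  define SA where "SA = {c\<in>\<alpha>. c < ?o + 2 * ?L}"
  define SB where "SB = {c\<in>\<alpha>. ?o + 2 * ?L \<le> c}"
  obtain a where a: "a \<in> \<alpha>" "?o \<le> a" "a \<le> ?o + ?L" using has_A by blast
  obtain b where b: "b \<in> \<alpha>" "?o + 2 * ?L \<le> b" "b \<le> 1" using has_B by blast
  have fSA: "finite SA" "SA \<noteq> {}" unfolding SA_def using fin a L by auto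
  have fSB: "finite SB" "SB \<noteq> {}" unfolding SB_def using fin b by auto
  define a0 where "a0 = Max SA"
  define b0 where "b0 = Min SB"
  have a0S: "a0 \<in> SA" unfolding a0_def using fSA by (rule Max_in)
  have b0S: "b0 \<in> SB" unfolding b0_def using fSB by (rule Min_in)
  have a0max: "\<forall>c\<in>\<alpha>. c < ?o + 2 * ?L \<longrightarrow> c \<le> a0" unfolding a0_def using fSA by (auto simp: SA_def)
  have b0min: "\<forall>c\<in>\<alpha>. ?o + 2 * ?L \<le> c \<longrightarrow> b0 \<le> c" unfolding b0_def using fSB by (auto simp: SB_def)
  have a0: "a0 \<in> \<alpha>" "?o \<le> a0" "a0 \<le> ?o + ?L"
  proof -
    show "a0 \<in> \<alpha>" using a0S SA_def by auto
    show "?o \<le> a0" using a0max a L by force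
    show "a0 \<le> ?o + ?L"
    proof (rule ccontr)
      assume "\<not> a0 \<le> ?o + ?L"
      hence "a0 \<in> \<alpha> \<inter> {J1 j<..<J0 (Suc j)}" using a0S g unfolding SA_def by auto
      thus False using no_gap by auto
    qed
  qed
  have b0: "b0 \<in> \<alpha>" "?o + 2 * ?L \<le> b0" "b0 \<le> 1" using b0S b0min b unfolding SB_def by force+
  have rs: "right_ok \<alpha> a0 ((a0 + b0) / 2)"
  proof (rule right_ok_succ[OF b0(1)])
    show "a0 < b0" using a0 b0 L by simp
    show "\<forall>c\<in>\<alpha>. a0 < c \<longrightarrow> b0 \<le> c" using a0max b0min by force
  qed
  obtain l where l: "left_ok \<alpha> a0 l" using left_ok_ex[OF fin a0(1)] by blast
  have la: "l \<le> a0" using l unfolding left_ok_def by simp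
  define h where "h = (a0 + b0) / 2"
  have cc: "M1 {l..h} = a0 * M0 {l..h}" "0 < M0 {l..h}" unfolding h_def using reg_CC[OF a0(1) l rs] by auto
  have up: "a0 + b0 < 2 * (?o + 2 * ?L)"
  proof (rule ccontr)
    assume "\<not> ?thesis"
    hence ab: "a0 = ?o + ?L" "b0 = ?o + 3 * ?L" using a0 b0 g by auto
    hence hv: "h = ?o + 2 * ?L" unfolding h_def by simp
    define e where "e = max l ?o"
    have e: "?o \<le> e" "e \<le> ?o + ?L" unfolding e_def using la ab L by auto
    have eqv: "y \<in> {l..h} \<longleftrightarrow> y \<in> {e..?o + ?L}" if y: "y \<in> Supp" "y \<noteq> ?o + 2 * ?L" for y
    proof
      assume yin: "y \<in> {l..h}"
      hence "?o \<le> y" using reg_ge[OF a0(1,2) l rs y(1)] unfolding h_def by auto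
      thus "y \<in> {e..?o + ?L}" using supp_split[OF y(1)] yin y(2) hv unfolding e_def by auto
    next
      assume "y \<in> {e..?o + ?L}"
      thus "y \<in> {l..h}" using hv L unfolding e_def by auto
    qed
    have M: "M0 {l..h} = M0 {e..?o + ?L}" "M1 {l..h} = M1 {e..?o + ?L}"
      by (rule M_cong[where z = "?o + 2 * ?L"]; use eqv in auto)+
    have Me: "M0 {e..?o + ?L} = ?r * (?o + ?L - e)" "M1 {e..?o + ?L} = ?r * (((?o + ?L)\<^sup>2 - e\<^sup>2) / 2)"
      using Mpiece_A[of e "?o + ?L"] e by auto
    have epos: "e < ?o + ?L"
    proof (rule ccontr)
      assume "\<not> e < ?o + ?L"
      hence "e = ?o + ?L" using e by simp
      thus False using cc M Me by simp
    qed
    have "?r * (((?o + ?L)\<^sup>2 - e\<^sup>2) / 2) = (?o + ?L) * (?r * (?o + ?L - e))" using cc M Me ab by simp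
    hence "?r * (?o + ?L - e) * ((?o + ?L + e) / 2) = ?r * (?o + ?L - e) * (?o + ?L)"
      by (simp add: power2_eq_square field_simps)
    hence "(?o + ?L + e) / 2 = ?o + ?L" using epos by simp
    thus False using epos by simp
  qed
  have lo: "2 * (?o + ?L) < a0 + b0"
  proof (rule ccontr)
    assume "\<not> ?thesis"
    hence ab: "a0 = ?o" "b0 = ?o + 2 * ?L" using a0 b0 g by auto
    hence hv: "h = ?o + ?L" unfolding h_def by simp
    have eqv: "y \<in> {l..h} \<longleftrightarrow> y \<in> {?o..?o + ?L}" if y: "y \<in> Supp" "y \<noteq> 0" for y
    proof
      assume yin: "y \<in> {l..h}"
      hence "?o \<le> y" using reg_ge[OF a0(1,2) l rs y(1)] unfolding h_def by auto
      thus "y \<in> {?o..?o + ?L}" using yin hv by auto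
    next
      assume "y \<in> {?o..?o + ?L}"
      thus "y \<in> {l..h}" using hv la ab by auto
    qed
    have M: "M0 {l..h} = M0 {?o..?o + ?L}" "M1 {l..h} = M1 {?o..?o + ?L}"
      by (rule M_cong[where z = 0]; use eqv in auto)+
    have "?w * (?o + ?L / 2) = ?o * ?w" using cc M MA ab by simp
    hence "?w * ?L = 0" by (simp add: algebra_simps)
    thus False using L by simp
  qed
  show ?thesis
  proof (intro conjI exI)
    show "\<alpha> \<inter> {J1 j<..<J0 (Suc j)} = {}" by (rule no_gap)
    show "a0 \<in> \<alpha>" "b0 \<in> \<alpha>" by (rule a0(1), rule b0(1))
    show "a0 \<in> J j" unfolding J_def using a0 g by auto
    show "J0 (Suc j) \<le> b0" "b0 \<le> 1" using b0 g by auto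
    show "\<forall>c\<in>\<alpha>. c < J0 (Suc j) \<longrightarrow> c \<le> a0" using a0max g by auto
    show "\<forall>c\<in>\<alpha>. J0 (Suc j) \<le> c \<longrightarrow> b0 \<le> c" using b0min g by auto
    show "2 * J1 j < a0 + b0" using lo g by simp
    show "a0 + b0 < 2 * J0 (Suc j)" using up g by simp
  qed
qed

end


definition Sep :: "real set \<Rightarrow> nat \<Rightarrow> bool" where
  "Sep \<alpha> j \<longleftrightarrow> (\<forall>x a. x \<in> Supp \<longrightarrow> J0 j < x \<longrightarrow> a \<in> \<alpha> \<longrightarrow> (a < J0 j \<or> 1 < a) \<longrightarrow>
        (\<exists>b\<in>\<alpha>. J0 j \<le> b \<and> b \<le> 1 \<and> \<bar>x - b\<bar> < \<bar>x - a\<bar>)) \<and>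
     (\<forall>x a. x \<in> Supp \<longrightarrow> x < J0 j \<longrightarrow> a \<in> \<alpha> \<longrightarrow> J0 j \<le> a \<longrightarrow>
        (\<exists>b\<in>\<alpha>. b < J0 j \<and> \<bar>x - b\<bar> < \<bar>x - a\<bar>))"

definition Spl :: "real set \<Rightarrow> nat \<Rightarrow> bool" where
  "Spl \<alpha> j \<longleftrightarrow> \<alpha> \<inter> {J1 j<..<J0 (Suc j)} = {} \<and>
   (\<exists>a0 b0. a0 \<in> \<alpha> \<and> a0 \<in> J j \<and> b0 \<in> \<alpha> \<and> J0 (Suc j) \<le> b0 \<and> b0 \<le> 1 \<and>
      (\<forall>c\<in>\<alpha>. c < J0 (Suc j) \<longrightarrow> c \<le> a0) \<and> (\<forall>c\<in>\<alpha>. J0 (Suc j) \<le> c \<longrightarrow> b0 \<le> c) \<and>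
      2 * J1 j < a0 + b0 \<and> a0 + b0 < 2 * J0 (Suc j))"

lemma Spl_of:
  assumes "optimal_n_means n \<alpha>" "1 \<le> j" "Sep \<alpha> j" "2 \<le> card (\<alpha> \<inter> {J0 j..1})"
  shows "Spl \<alpha> j"
  unfolding Spl_def
  by (rule split_main[OF assms(1,2) _ _ assms(4)]) (use assms(3) in \<open>auto simp: Sep_def\<close>)

lemma Sep1:
  assumes opt: "optimal_n_means n \<alpha>"
  shows "Sep \<alpha> 1"
proof -
  have "J0 1 = 0" by (simp add: J0_def)
  thus ?thesis unfolding Sep_def using in_01[OF opt] Supp_01 by force
qed

lemma Sep_step:
  assumes opt: "optimal_n_means n \<alpha>" and j: "1 \<le> j" and sp: "Spl \<alpha> j"
  shows "Sep \<alpha> (Suc j)"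
proof -
  obtain a0 b0 where ab: "a0 \<in> \<alpha>" "a0 \<in> J j" "b0 \<in> \<alpha>" "J0 (Suc j) \<le> b0" "b0 \<le> 1"
    "\<forall>c\<in>\<alpha>. c < J0 (Suc j) \<longrightarrow> c \<le> a0" "\<forall>c\<in>\<alpha>. J0 (Suc j) \<le> c \<longrightarrow> b0 \<le> c"
    "2 * J1 j < a0 + b0" "a0 + b0 < 2 * J0 (Suc j)"
    using sp unfolding Spl_def by blast
  have a0J: "a0 \<le> J1 j" using ab(2) unfolding J_def by auto
  have gap: "J1 j < J0 (Suc j)" by (rule J1_lt_J0_Suc)
  show ?thesis unfolding Sep_def
  proof (intro conjI allI impI)
    fix x a assume x: "x \<in> Supp" "J0 (Suc j) < x" and a: "a \<in> \<alpha>" and ao: "a < J0 (Suc j) \<or> 1 < a"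
    have "a < J0 (Suc j)" using ao in_01[OF opt a] J1_lt1[of "Suc j"] J0_lt_J1[of "Suc j"] by force
    hence "a \<le> a0" using ab a by auto
    hence "(x - b0)\<^sup>2 < (x - a)\<^sup>2" using ab x a0J gap by (intro closer_right_strict) auto
    thus "\<exists>b\<in>\<alpha>. J0 (Suc j) \<le> b \<and> b \<le> 1 \<and> \<bar>x - b\<bar> < \<bar>x - a\<bar>"
      using ab by (auto simp: abs_less_sq)
  next
    fix x a assume x: "x \<in> Supp" "x < J0 (Suc j)" and a: "a \<in> \<alpha>" "J0 (Suc j) \<le> a"
    have "x \<le> J1 j" using Supp_gap[OF j x(1)] x by auto
    moreover have "b0 \<le> a" using ab a by auto
    ultimately have "(x - a0)\<^sup>2 < (x - a)\<^sup>2" using ab a a0J gap by (intro closer_left_strict) auto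
    thus "\<exists>b\<in>\<alpha>. b < J0 (Suc j) \<and> \<bar>x - b\<bar> < \<bar>x - a\<bar>"
      using ab a0J gap by (intro bexI[of _ a0]) (auto simp: abs_less_sq)
  qed
qed

lemma induct_main:
  assumes opt: "optimal_n_means n \<alpha>"
  shows "2 \<le> card (\<alpha> \<inter> {J0 (Suc k)..1}) \<Longrightarrow> Sep \<alpha> (Suc k) \<and> Spl \<alpha> (Suc k)"
proof (induction k)
  case 0
  have "Sep \<alpha> 1" by (rule Sep1[OF opt])
  thus ?case using Spl_of[OF opt _ _ 0[simplified]] by simp
next
  case (Suc k)
  have fa: "finite \<alpha>" using opt unfolding optimal_n_means_def by auto
  have "J0 (Suc k) \<le> J0 (Suc (Suc k))" by (rule J0_mono) simp
  hence "\<alpha> \<inter> {J0 (Suc (Suc k))..1} \<subseteq> \<alpha> \<inter> {J0 (Suc k)..1}" by auto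
  hence "card (\<alpha> \<inter> {J0 (Suc (Suc k))..1}) \<le> card (\<alpha> \<inter> {J0 (Suc k)..1})" using fa by (intro card_mono) auto
  hence "Sep \<alpha> (Suc k) \<and> Spl \<alpha> (Suc k)" using Suc by simp
  hence sep: "Sep \<alpha> (Suc (Suc k))" using Sep_step[OF opt] by simp
  thus ?case using Spl_of[OF opt _ sep Suc.prems] by simp
qed


theorem proposition4p6:
  fixes k n :: nat and \<alpha> :: "real set"
  assumes "k \<ge> 1" and "n \<ge> 1"
    and "optimal_n_means n \<alpha>"
    and "card (\<alpha> \<inter> {J0 (k+1) .. 1}) \<ge> 2"
  shows "(\<alpha> \<inter> J (k+1) \<noteq> {} \<and> \<alpha> \<inter> {J0 (k+2) .. 1} \<noteq> {})
       \<and> \<alpha> \<inter> {J1 (k+1) <..< J0 (k+2)} = {}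
       \<and> (\<forall>a \<in> \<alpha> \<inter> J (k+1). voronoi a \<alpha> \<inter> {J0 (k+2) .. 1} = {})
       \<and> (\<forall>a \<in> \<alpha> \<inter> {J0 (k+2) .. 1}. voronoi a \<alpha> \<inter> J (k+1) = {})"
proof -
  have opt: "optimal_n_means n \<alpha>" by fact
  have fa: "finite \<alpha>" using opt unfolding optimal_n_means_def by auto
  have e1: "k + 1 = Suc k" "k + 2 = Suc (Suc k)" by simp_all
  have "Spl \<alpha> (Suc k)" using induct_main[OF opt, of k] assms(4) e1 by simp
  then obtain a0 b0 where ab: "a0 \<in> \<alpha>" "a0 \<in> J (Suc k)" "b0 \<in> \<alpha>" "J0 (Suc (Suc k)) \<le> b0" "b0 \<le> 1"
    "\<forall>c\<in>\<alpha>. c < J0 (Suc (Suc k)) \<longrightarrow> c \<le> a0" "\<forall>c\<in>\<alpha>. J0 (Suc (Suc k)) \<le> c \<longrightarrow> b0 \<le> c"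
    "2 * J1 (Suc k) < a0 + b0" "a0 + b0 < 2 * J0 (Suc (Suc k))"
    and gap: "\<alpha> \<inter> {J1 (Suc k)<..<J0 (Suc (Suc k))} = {}"
    unfolding Spl_def by blast
  have a0J: "a0 \<le> J1 (Suc k)" using ab(2) unfolding J_def by auto
  have gp: "J1 (Suc k) < J0 (Suc (Suc k))" by (rule J1_lt_J0_Suc)
  have vmin: "\<bar>x - a\<bar> \<le> \<bar>x - c\<bar>" if "a \<in> voronoi a \<alpha>" "x \<in> voronoi a \<alpha>" "c \<in> \<alpha>" for a x c
  proof -
    have "\<bar>x - a\<bar> = Min ((\<lambda>b. \<bar>x - b\<bar>) ` \<alpha>)" using that(2) unfolding voronoi_def by auto
    also have "\<dots> \<le> \<bar>x - c\<bar>" using fa that(3) by (intro Min_le) auto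
    finally show ?thesis .
  qed
  have vmin': "\<bar>x - a\<bar> \<le> \<bar>x - c\<bar>" if "x \<in> voronoi a \<alpha>" "c \<in> \<alpha>" for a x c
  proof -
    have "\<bar>x - a\<bar> = Min ((\<lambda>b. \<bar>x - b\<bar>) ` \<alpha>)" using that(1) unfolding voronoi_def by auto
    also have "\<dots> \<le> \<bar>x - c\<bar>" using fa that(2) by (intro Min_le) auto
    finally show ?thesis .
  qed
  show ?thesis unfolding e1
  proof (intro conjI ballI)
    show "\<alpha> \<inter> J (Suc k) \<noteq> {}" using ab by auto
    show "\<alpha> \<inter> {J0 (Suc (Suc k))..1} \<noteq> {}" using ab by auto
    show "\<alpha> \<inter> {J1 (Suc k)<..<J0 (Suc (Suc k))} = {}" by (rule gap)
  next
    fix a assume a: "a \<in> \<alpha> \<inter> J (Suc k)"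
    show "voronoi a \<alpha> \<inter> {J0 (Suc (Suc k))..1} = {}"
    proof (rule ccontr)
      assume "voronoi a \<alpha> \<inter> {J0 (Suc (Suc k))..1} \<noteq> {}"
      then obtain x where x: "x \<in> voronoi a \<alpha>" "J0 (Suc (Suc k)) \<le> x" by auto
      have "a \<le> J1 (Suc k)" using a unfolding J_def by auto
      hence "a \<le> a0" using ab a gp by auto
      hence "(x - b0)\<^sup>2 < (x - a)\<^sup>2" using ab x a0J gp by (intro closer_right_strict) auto
      moreover have "\<bar>x - a\<bar> \<le> \<bar>x - b0\<bar>" using vmin'[OF x(1) ab(3)] .
      ultimately show False by (simp add: abs_le_square_iff)
    qed
  next
    fix b assume b: "b \<in> \<alpha> \<inter> {J0 (Suc (Suc k))..1}"
    show "voronoi b \<alpha> \<inter> J (Suc k) = {}"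
    proof (rule ccontr)
      assume "voronoi b \<alpha> \<inter> J (Suc k) \<noteq> {}"
      then obtain x where x: "x \<in> voronoi b \<alpha>" "x \<in> J (Suc k)" by auto
      have xJ: "x \<le> J1 (Suc k)" using x unfolding J_def by auto
      have "b0 \<le> b" using ab b by auto
      hence "(x - a0)\<^sup>2 < (x - b)\<^sup>2" using ab b xJ a0J gp by (intro closer_left_strict) auto
      moreover have "\<bar>x - b\<bar> \<le> \<bar>x - a0\<bar>" using vmin'[OF x(1) ab(1)] .
      ultimately show False by (simp add: abs_le_square_iff)
    qed
  qed
qed


end
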